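(* Let $(\nu_n)_{n=1}^\infty$ be an increasing sequence of positive integers and let $\alpha=\liminf_{n\to\infty}\frac{\nu_n}{n}\in[0,\infty]$. Let \[F((\nu_n)_{n=1}^\infty)=\{x\in J\colon a_{n}(x),\ldots,a_{n+\nu_n-1}(x)\ \text{is an arithmetic progression for infinitely many}\ n\geq1\}.\] Then $\dim_{\rm H} F((\nu_n)_{n=1}^\infty)\ge \frac{1}{2(1+\alpha)}$ (interpreted as $0$ when $\alpha=\infty$).
   Context: Every irrational $x\in(0,1)$ has a regular continued fraction expansion with partial quotients $a_n(x)\in\mathbb N$, $n\ge1$. $J=\{x\in(0,1)\setminus\mathbb Q\colon a_n(x)<a_{n+1}(x)\text{ for every }n\ge1\}$. $\dim_{\rm H}$ denotes Hausdorff dimension in $[0,1]$. *)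

theory Defs
  imports "HOL-Analysis.Analysis"
begin

definition gauss_map :: "real \<Rightarrow> real" where
  "gauss_map x = frac (1 / x)"

text \<open>n-th partial quotient (n \<ge> 1) of the regular continued fraction of x in (0,1):
  a_n(x) = floor (1 / T^(n-1)(x)).\<close>
definition cf_pq :: "nat \<Rightarrow> real \<Rightarrow> nat" where
  "cf_pq n x = nat \<lfloor>1 / (gauss_map ^^ (n - 1)) x\<rfloor>"

definition J_set :: "real set" where
  "J_set = {x. 0 < x \<and> x < 1 \<and> x \<notin> \<rat> \<and> (\<forall>n\<ge>1. cf_pq n x < cf_pq (Suc n) x)}"

definition hausdorff_pre :: "real \<Rightarrow> real \<Rightarrow> real set \<Rightarrow> ennreal" where
  "hausdorff_pre s \<delta> E =
     (INF U \<in> {U :: nat \<Rightarrow> real set. E \<subseteq> (\<Union>i. U i) \<and>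
                 (\<forall>i. bounded (U i) \<and> diameter (U i) \<le> \<delta>)}.
        (\<Sum>i. ennreal (diameter (U i) powr s)))"

definition hausdorff_measure :: "real \<Rightarrow> real set \<Rightarrow> ennreal" where
  "hausdorff_measure s E = (SUP \<delta> \<in> {0<..}. hausdorff_pre s \<delta> E)"

definition hausdorff_dim :: "real set \<Rightarrow> ereal" where
  "hausdorff_dim E = Inf {ereal s | s. 0 \<le> s \<and> hausdorff_measure s E = 0}"

definition is_arith_prog :: "(nat \<Rightarrow> nat) \<Rightarrow> nat \<Rightarrow> nat \<Rightarrow> bool" where
  "is_arith_prog a n L \<longleftrightarrow> (\<exists>d::int. \<forall>k<L. int (a (n + k)) = int (a n) + int k * d)"

definition F_set :: "(nat \<Rightarrow> nat) \<Rightarrow> real set" where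
  "F_set \<nu> = {x \<in> J_set. infinite {n. 1 \<le> n \<and> is_arith_prog (\<lambda>m. cf_pq m x) n (\<nu> n)}}"

end

theory Submission
  imports Defs "HOL-Analysis.Analysis"
begin
definition phi :: "nat \<Rightarrow> real \<Rightarrow> real" where "phi a y = 1 / (real a + y)"

lemma floor_phi:
  assumes "a \<ge> 1" "0 \<le> y" "y < 1"
  shows "\<lfloor>1 / phi a y\<rfloor> = int a"
  using assms by (simp add: phi_def floor_eq_iff)

lemma gauss_phi:
  assumes "a \<ge> 1" "0 \<le> y" "y < 1"
  shows "gauss_map (phi a y) = y"
proof -
  have "1 / phi a y = real a + y" using assms by (simp add: phi_def)
  then show ?thesis using floor_phi[OF assms] by (simp add: gauss_map_def frac_def)
qed

lemma cf_pq_phi1: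
  assumes "a \<ge> 1" "0 \<le> y" "y < 1"
  shows "cf_pq (Suc 0) (phi a y) = a"
  using floor_phi[OF assms] by (simp add: cf_pq_def)

lemma cf_pq_phi:
  assumes "a \<ge> 1" "0 \<le> y" "y < 1"
  shows "cf_pq (Suc (Suc n)) (phi a y) = cf_pq (Suc n) y"
proof -
  have "(gauss_map ^^ Suc n) (phi a y) = (gauss_map ^^ n) y"
    by (simp only: funpow_Suc_right o_apply gauss_phi[OF assms])
  then show ?thesis by (simp add: cf_pq_def)
qed

lemma phi_range:
  assumes "a \<ge> 1" "0 \<le> y" "y \<le> 1"
  shows "1 / (real a + 1) \<le> phi a y" "phi a y \<le> 1 / real a" "0 < phi a y" "phi a y \<le> 1"
proof -
  have a: "real a \<ge> 1" using assms by simp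
  show "1 / (real a + 1) \<le> phi a y" unfolding phi_def using assms a
    by (intro divide_left_mono) auto
  show "phi a y \<le> 1 / real a" unfolding phi_def using assms a
    by (intro divide_left_mono) auto
  show "0 < phi a y" unfolding phi_def using assms a by auto
  show "phi a y \<le> 1" unfolding phi_def using assms a by auto
qed

lemma phi_diff:
  assumes "a \<ge> 1" "0 \<le> y" "0 \<le> y'"
  shows "\<bar>phi a y - phi a y'\<bar> = \<bar>y - y'\<bar> / ((real a + y) * (real a + y'))"
proof -
  have p: "real a + y > 0" "real a + y' > 0" using assms by auto
  have "phi a y - phi a y' = (y' - y) / ((real a + y) * (real a + y'))"
    unfolding phi_def using p by (simp add: field_simps)
  then show ?thesis using p by (simp add: abs_div abs_minus_commute)
qed

lemma phi_lip_upper: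
  assumes "a \<ge> 1" "0 \<le> y" "0 \<le> y'"
  shows "\<bar>phi a y - phi a y'\<bar> \<le> \<bar>y - y'\<bar> * (1 / (real a)^2)"
proof -
  have a: "real a \<ge> 1" using assms by simp
  have "real a * real a \<le> (real a + y) * (real a + y')"
    using assms a by (intro mult_mono) auto
  then have "\<bar>y - y'\<bar> / ((real a + y) * (real a + y')) \<le> \<bar>y - y'\<bar> / (real a * real a)"
    using a assms by (intro divide_left_mono) (auto intro!: mult_pos_pos)
  then show ?thesis using phi_diff[OF assms] by (simp add: power2_eq_square)
qed

lemma phi_lip_lower:
  assumes "a \<ge> 1" "0 \<le> y" "0 \<le> y'" "y \<le> 1" "y' \<le> 1"
  shows "\<bar>y - y'\<bar> * (1 / (real a + 1)^2) \<le> \<bar>phi a y - phi a y'\<bar>"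
proof -
  have a: "real a \<ge> 1" using assms by simp
  have "(real a + y) * (real a + y') \<le> (real a + 1) * (real a + 1)"
    using assms a by (intro mult_mono) auto
  then have "\<bar>y - y'\<bar> / ((real a + 1) * (real a + 1)) \<le> \<bar>y - y'\<bar> / ((real a + y) * (real a + y'))"
    using a assms by (intro divide_left_mono) auto
  then show ?thesis using phi_diff[OF assms(1-3)] by (simp add: power2_eq_square)
qed

fun Phi :: "(nat \<Rightarrow> nat) \<Rightarrow> nat \<Rightarrow> real \<Rightarrow> real" where
  "Phi s 0 y = y"
| "Phi s (Suc n) y = Phi s n (phi (s n) y)"

lemma Phi_range:
  assumes "\<forall>t. s t \<ge> 1" "0 \<le> y" "y \<le> 1"
  shows "0 \<le> Phi s n y \<and> Phi s n y \<le> 1"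
  using assms(2,3)
proof (induction n arbitrary: y)
  case 0 then show ?case by simp
next
  case (Suc n)
  have "0 \<le> phi (s n) y" "phi (s n) y \<le> 1" using phi_range[of "s n" y] assms(1) Suc.prems by auto
  then show ?case using Suc.IH by simp
qed

lemma Phi_lip_upper:
  assumes "\<forall>t. s t \<ge> 1" "0 \<le> y" "y \<le> 1" "0 \<le> y'" "y' \<le> 1"
  shows "\<bar>Phi s n y - Phi s n y'\<bar> \<le> \<bar>y - y'\<bar> * (\<Prod>t<n. 1 / (real (s t))^2)"
  using assms(2-5)
proof (induction n arbitrary: y y')
  case 0 then show ?case by simp
next
  case (Suc n)
  let ?z = "phi (s n) y" and ?z' = "phi (s n) y'"
  have z: "0 \<le> ?z" "?z \<le> 1" "0 \<le> ?z'" "?z' \<le> 1"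
    using phi_range[of "s n"] assms(1) Suc.prems by (auto simp: less_imp_le)
  have P: "(\<Prod>t<n. 1 / (real (s t))^2) \<ge> 0" by (intro prod_nonneg) auto
  have "\<bar>Phi s (Suc n) y - Phi s (Suc n) y'\<bar> \<le> \<bar>?z - ?z'\<bar> * (\<Prod>t<n. 1 / (real (s t))^2)"
    using Suc.IH[OF z] by simp
  also have "\<dots> \<le> (\<bar>y - y'\<bar> * (1 / (real (s n))^2)) * (\<Prod>t<n. 1 / (real (s t))^2)"
    using phi_lip_upper[of "s n" y y'] assms(1) Suc.prems P by (intro mult_right_mono) auto
  also have "\<dots> = \<bar>y - y'\<bar> * (\<Prod>t<Suc n. 1 / (real (s t))^2)"
    by (simp add: prod.lessThan_Suc)
  finally show ?case .
qed

lemma Phi_lip_lower: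
  assumes "\<forall>t. s t \<ge> 1" "0 \<le> y" "y \<le> 1" "0 \<le> y'" "y' \<le> 1"
  shows "\<bar>y - y'\<bar> * (\<Prod>t<n. 1 / (real (s t) + 1)^2) \<le> \<bar>Phi s n y - Phi s n y'\<bar>"
  using assms(2-5)
proof (induction n arbitrary: y y')
  case 0 then show ?case by simp
next
  case (Suc n)
  let ?z = "phi (s n) y" and ?z' = "phi (s n) y'"
  have z: "0 \<le> ?z" "?z \<le> 1" "0 \<le> ?z'" "?z' \<le> 1"
    using phi_range[of "s n"] assms(1) Suc.prems by (auto simp: less_imp_le)
  have P: "(\<Prod>t<n. 1 / (real (s t) + 1)^2) \<ge> 0" by (intro prod_nonneg) auto
  have "\<bar>y - y'\<bar> * (\<Prod>t<Suc n. 1 / (real (s t) + 1)^2)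
       = (\<bar>y - y'\<bar> * (1 / (real (s n) + 1)^2)) * (\<Prod>t<n. 1 / (real (s t) + 1)^2)"
    by (simp add: prod.lessThan_Suc)
  also have "\<dots> \<le> \<bar>?z - ?z'\<bar> * (\<Prod>t<n. 1 / (real (s t) + 1)^2)"
    using phi_lip_lower[of "s n" y y'] assms(1) Suc.prems P by (intro mult_right_mono) auto
  also have "\<dots> \<le> \<bar>Phi s (Suc n) y - Phi s (Suc n) y'\<bar>"
    using Suc.IH[OF z] by simp
  finally show ?case .
qed

lemma Phi_add:
  "Phi s (n + m) y = Phi s n (Phi (\<lambda>t. s (t + n)) m y)"
  by (induction m arbitrary: y) (simp_all add: add.commute)

lemma Phi_one: "Phi s (Suc 0) y = phi (s 0) y" by simp

lemma isCont_phi: assumes "0 \<le> y" "a \<ge> 1" shows "isCont (phi a) y"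
  unfolding phi_def using assms by (intro continuous_intros) auto

lemma isCont_Phi:
  assumes "\<forall>t. s t \<ge> 1" "0 \<le> y"
  shows "isCont (Phi s n) y"
  using assms(2)
proof (induction n arbitrary: y)
  case 0 then show ?case by (simp add: id_def[symmetric])
next
  case (Suc n)
  have e: "Phi s (Suc n) = Phi s n \<circ> phi (s n)" by (rule ext) simp
  have "0 \<le> phi (s n) y" using Suc.prems assms(1) unfolding phi_def by simp
  then have c2: "isCont (Phi s n) (phi (s n) y)" using Suc.IH by blast
  have c1: "isCont (phi (s n)) y" using isCont_phi[OF Suc.prems] assms(1) by blast
  show ?case unfolding e by (rule continuous_at_compose[OF c1 c2])
qed

definition cfval :: "(nat \<Rightarrow> nat) \<Rightarrow> real" where "cfval s = lim (\<lambda>n. Phi s n 0)"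

lemma prod_inv_sq_le:
  assumes "\<forall>t. s t \<ge> 2"
  shows "(\<Prod>t<n. 1 / (real (s t))^2) \<le> (1/4)^n"
proof -
  have "(\<Prod>t<n. 1 / (real (s t))^2) \<le> (\<Prod>t<n. (1/4::real))"
  proof (intro prod_mono conjI)
    fix t assume "t \<in> {..<n}"
    have "real (s t) \<ge> 2" using assms by (metis of_nat_le_iff of_nat_numeral)
    then have "(real (s t))^2 \<ge> 2^2" by (intro power_mono) auto
    then show "1 / (real (s t))^2 \<le> 1/4" by (simp add: divide_simps)
  qed auto
  then show ?thesis by simp
qed

lemma Phi_cauchy_bound:
  assumes "\<forall>t. s t \<ge> 2" "n \<le> m"
  shows "\<bar>Phi s m 0 - Phi s n 0\<bar> \<le> (1/4)^n"
proof -
  have g1: "\<forall>t. s t \<ge> 1" using assms(1) by (metis le_trans one_le_numeral)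
  have g1': "\<forall>t. (\<lambda>t. s (t + n)) t \<ge> 1" using g1 by simp
  define y where "y = Phi (\<lambda>t. s (t + n)) (m - n) 0"
  have y: "0 \<le> y" "y \<le> 1" using Phi_range[OF g1', of 0] y_def by auto
  have "Phi s m 0 = Phi s n y" using Phi_add[of s n "m - n" 0] assms(2) y_def by simp
  moreover have "Phi s n 0 = Phi s n 0" ..
  ultimately have "\<bar>Phi s m 0 - Phi s n 0\<bar> \<le> \<bar>y - 0\<bar> * (\<Prod>t<n. 1 / (real (s t))^2)"
    using Phi_lip_upper[OF g1, of y 0 n] y by simp
  also have "\<dots> \<le> 1 * (1/4)^n"
    using y prod_inv_sq_le[OF assms(1), of n]
    by (intro mult_mono) (auto intro!: prod_nonneg)
  finally show ?thesis by simp
qed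

lemma cfval_lim:
  assumes "\<forall>t. s t \<ge> 2"
  shows "(\<lambda>n. Phi s n 0) \<longlonglongrightarrow> cfval s"
proof -
  have "Cauchy (\<lambda>n. Phi s n 0)"
  proof (rule metric_CauchyI)
    fix e :: real assume e: "0 < e"
    obtain M where M: "(1/4::real)^M < e/2" using real_arch_pow_inv[of "e/2" "1/4"] e by auto
    show "\<exists>M. \<forall>m\<ge>M. \<forall>n\<ge>M. dist (Phi s m 0) (Phi s n 0) < e"
    proof (intro exI allI impI)
      fix m n assume "M \<le> m" "M \<le> n"
      then have "\<bar>Phi s m 0 - Phi s M 0\<bar> \<le> (1/4)^M" "\<bar>Phi s n 0 - Phi s M 0\<bar> \<le> (1/4)^M"
        using Phi_cauchy_bound[OF assms] by auto
      then show "dist (Phi s m 0) (Phi s n 0) < e" using M by (simp add: dist_real_def)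
    qed
  qed
  then show ?thesis unfolding cfval_def by (simp add: Cauchy_convergent_iff convergent_LIMSEQ_iff)
qed

lemma cfval_range:
  assumes "\<forall>t. s t \<ge> 2"
  shows "0 \<le> cfval s" "cfval s \<le> 1"
proof -
  have g1: "\<forall>t. s t \<ge> 1" using assms(1) by (metis le_trans one_le_numeral)
  have r: "0 \<le> Phi s n 0 \<and> Phi s n 0 \<le> 1" for n using Phi_range[OF g1, of 0] by simp
  show "0 \<le> cfval s" using r by (intro LIMSEQ_le_const[OF cfval_lim[OF assms]]) auto
  show "cfval s \<le> 1" using r by (intro LIMSEQ_le_const2[OF cfval_lim[OF assms]]) auto
qed

lemma cfval_Phi:
  assumes "\<forall>t. s t \<ge> 2"
  shows "cfval s = Phi s n (cfval (\<lambda>t. s (t + n)))"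
proof -
  have g1: "\<forall>t. s t \<ge> 1" using assms(1) by (metis le_trans one_le_numeral)
  have gs: "\<forall>t. (\<lambda>t. s (t + n)) t \<ge> 2" using assms by simp
  have l1: "(\<lambda>m. Phi s (m + n) 0) \<longlonglongrightarrow> cfval s"
    using LIMSEQ_ignore_initial_segment[OF cfval_lim[OF assms], of n] .
  have "(\<lambda>m. Phi s n (Phi (\<lambda>t. s (t + n)) m 0)) \<longlonglongrightarrow> Phi s n (cfval (\<lambda>t. s (t + n)))"
    by (rule isCont_tendsto_compose[OF isCont_Phi[OF g1 cfval_range(1)[OF gs]] cfval_lim[OF gs]])
  moreover have "(\<lambda>m. Phi s n (Phi (\<lambda>t. s (t + n)) m 0)) = (\<lambda>m. Phi s (m + n) 0)"
    using Phi_add[of s n] by (simp add: add.commute)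
  ultimately show ?thesis using l1 LIMSEQ_unique by metis
qed

lemma cfval_phi:
  assumes "\<forall>t. s t \<ge> 2"
  shows "cfval s = phi (s 0) (cfval (\<lambda>t. s (Suc t)))"
  using cfval_Phi[OF assms, of 1] by simp

lemma cfval_bounds:
  assumes "\<forall>t. s t \<ge> 2"
  shows "0 < cfval s" "cfval s \<le> 1/2"
proof -
  have gs: "\<forall>t. (\<lambda>t. s (Suc t)) t \<ge> 2" using assms by simp
  have s0: "s 0 \<ge> 1" "real (s 0) \<ge> 2" using assms[rule_format, of 0] by linarith+
  note r = cfval_range[OF gs]
  show "0 < cfval s" using phi_range(3)[OF s0(1) r] cfval_phi[OF assms] by simp
  have "cfval s \<le> 1 / real (s 0)" using phi_range(2)[OF s0(1) r] cfval_phi[OF assms] by simp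
  also have "\<dots> \<le> 1/2" using s0 by (simp add: divide_simps)
  finally show "cfval s \<le> 1/2" .
qed

lemma cfval_digits:
  assumes "\<forall>t. s t \<ge> 2"
  shows "cf_pq (Suc n) (cfval s) = s n"
  using assms
proof (induction n arbitrary: s)
  case 0
  have gs: "\<forall>t. (\<lambda>t. s (Suc t)) t \<ge> 2" using 0 by simp
  have s0: "s 0 \<ge> 1" using 0 by (metis le_trans one_le_numeral)
  show ?case using cfval_phi[OF 0] cf_pq_phi1[OF s0 cfval_range(1)[OF gs]] cfval_bounds(2)[OF gs]
    by simp
next
  case (Suc n)
  have gs: "\<forall>t. (\<lambda>t. s (Suc t)) t \<ge> 2" using Suc.prems by simp
  have s0: "s 0 \<ge> 1" using Suc.prems by (metis le_trans one_le_numeral)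
  have "cf_pq (Suc (Suc n)) (cfval s) = cf_pq (Suc n) (cfval (\<lambda>t. s (Suc t)))"
    using cfval_phi[OF Suc.prems] cf_pq_phi[OF s0 cfval_range(1)[OF gs]] cfval_bounds(2)[OF gs]
    by simp
  also have "\<dots> = s (Suc n)" using Suc.IH[OF gs] by simp
  finally show ?case .
qed

lemma cfval_irrat:
  assumes "\<forall>t. s t \<ge> 2"
  shows "cfval s \<notin> \<rat>"
proof
  assume q: "cfval s \<in> \<rat>"
  define y where "y n = cfval (\<lambda>t. s (t + n))" for n
  have gsn: "\<forall>t. (\<lambda>t. s (t + n)) t \<ge> 2" for n using assms by simp
  have yb: "0 < y n" "y n \<le> 1/2" for n using cfval_bounds[OF gsn] y_def by auto
  have yrec: "y n = 1 / (real (s n) + y (Suc n))" for n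
  proof -
    have "y n = phi ((\<lambda>t. s (t + n)) 0) (cfval (\<lambda>t. (\<lambda>t. s (t + n)) (Suc t)))"
      using cfval_phi[OF gsn[of n]] y_def by simp
    also have "(\<lambda>t. (\<lambda>t. s (t + n)) (Suc t)) = (\<lambda>t. s (t + Suc n))" by simp
    finally show ?thesis by (simp add: y_def phi_def)
  qed
  obtain r0 d0 :: nat where d0: "d0 \<noteq> 0" "\<bar>cfval s\<bar> = real r0 / real d0"
    using Rats_abs_nat_div_natE[OF q] by metis
  have y0: "y 0 = real r0 / real d0" using d0 y_def yb[of 0] by simp
  have claim: "\<exists>r d::nat. d > 0 \<and> y n = real r / real d \<and> d + n \<le> d0" for n
  proof (induction n)
    case 0 then show ?case using y0 d0 by (intro exI[of _ r0] exI[of _ d0]) auto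
  next
    case (Suc n)
    then obtain r d :: nat where rd: "d > 0" "y n = real r / real d" "d + n \<le> d0" by blast
    have "0 < real r / real d" "real r / real d < 1" using yb[of n] rd by auto
    then have rpos: "r > 0" and rd_lt: "r < d" using rd(1) by (auto simp: divide_simps)
    have "y (Suc n) = 1 / y n - real (s n)" using yrec[of n] yb[of "Suc n"] yb[of n] by (simp add: field_simps)
    also have "\<dots> = (real d - real (s n) * real r) / real r" unfolding rd(2) using rd rpos by (simp add: field_simps)
    finally have ys: "y (Suc n) = (real d - real (s n) * real r) / real r" .
    then have "real d - real (s n) * real r = y (Suc n) * real r" using rpos by (simp add: field_simps)
    then have "real d - real (s n) * real r > 0" using yb[of "Suc n"] rpos by simp
    then have le: "s n * r < d" by (metis diff_gt_0_iff_gt of_nat_less_iff of_nat_mult)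
    have "y (Suc n) = real (d - s n * r) / real r" using ys le by (simp add: of_nat_diff)
    then show ?case using rpos rd rd_lt by (intro exI[of _ "d - s n * r"] exI[of _ r]) auto
  qed
  from claim[of d0] obtain r d :: nat where "d > 0" "d + d0 \<le> d0" by blast
  then show False by simp
qed

lemma Phi_cong: "(\<forall>t<n. s t = s' t) \<Longrightarrow> Phi s n y = Phi s' n y"
  by (induction n arbitrary: y) auto

lemma cfval_shift_phi:
  assumes "\<forall>t. s t \<ge> 2"
  shows "cfval (\<lambda>t. s (t + n)) = phi (s n) (cfval (\<lambda>t. s (t + Suc n)))"
proof -
  have gsn: "\<forall>t. (\<lambda>t. s (t + n)) t \<ge> 2" using assms by simp
  have "(\<lambda>t. (\<lambda>t. s (t + n)) (Suc t)) = (\<lambda>t. s (t + Suc n))" by simp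
  then show ?thesis using cfval_phi[OF gsn] by simp
qed

lemma cfval_close:
  assumes "\<forall>t. s t \<ge> 2" "\<forall>t. s' t \<ge> 2" "\<forall>t<n. s t = s' t"
  shows "\<bar>cfval s - cfval s'\<bar> \<le> (1/4)^n"
proof -
  have g1: "\<forall>t. s t \<ge> 1" using assms(1) by (metis le_trans one_le_numeral)
  have gsn: "\<forall>t. (\<lambda>t. s (t + n)) t \<ge> 2" "\<forall>t. (\<lambda>t. s' (t + n)) t \<ge> 2" using assms by auto
  define y where "y = cfval (\<lambda>t. s (t + n))"
  define y' where "y' = cfval (\<lambda>t. s' (t + n))"
  have y: "0 \<le> y" "y \<le> 1" "0 \<le> y'" "y' \<le> 1" using cfval_range[OF gsn(1)] cfval_range[OF gsn(2)]
    y_def y'_def by auto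
  have "cfval s = Phi s n y" using cfval_Phi[OF assms(1)] y_def by simp
  moreover have "cfval s' = Phi s n y'" using cfval_Phi[OF assms(2)] y'_def Phi_cong[OF assms(3)] by simp
  ultimately have "\<bar>cfval s - cfval s'\<bar> \<le> \<bar>y - y'\<bar> * (\<Prod>t<n. 1 / (real (s t))^2)"
    using Phi_lip_upper[OF g1 y] by simp
  also have "\<dots> \<le> 1 * (1/4)^n"
    using y prod_inv_sq_le[OF assms(1), of n]
    by (intro mult_mono) (auto intro!: prod_nonneg)
  finally show ?thesis by simp
qed

lemma cfval_sep:
  assumes "\<forall>t. s t \<ge> 2" "\<forall>t. s' t \<ge> 2" "\<forall>t<n. s t = s' t" "s n < s' n"
  shows "(\<Prod>t<n. 1 / (real (s t) + 1)^2) * (1 / (2 * (real (s n) + 1)^2)) \<le> \<bar>cfval s - cfval s'\<bar>"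
proof -
  have g1: "\<forall>t. s t \<ge> 1" using assms(1) by (metis le_trans one_le_numeral)
  have gsn: "\<forall>t. (\<lambda>t. s (t + n)) t \<ge> 2" "\<forall>t. (\<lambda>t. s' (t + n)) t \<ge> 2" using assms by auto
  have gsn1: "\<forall>t. (\<lambda>t. s (t + Suc n)) t \<ge> 2" "\<forall>t. (\<lambda>t. s' (t + Suc n)) t \<ge> 2" using assms by auto
  define y where "y = cfval (\<lambda>t. s (t + n))"
  define y' where "y' = cfval (\<lambda>t. s' (t + n))"
  define z where "z = cfval (\<lambda>t. s (t + Suc n))"
  define z' where "z' = cfval (\<lambda>t. s' (t + Suc n))"
  have z: "0 < z" "z \<le> 1/2" "0 < z'" "z' \<le> 1/2" using cfval_bounds[OF gsn1(1)] cfval_bounds[OF gsn1(2)]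
    z_def z'_def by auto
  have y: "0 \<le> y" "y \<le> 1" "0 \<le> y'" "y' \<le> 1" using cfval_range[OF gsn(1)] cfval_range[OF gsn(2)]
    y_def y'_def by auto
  have yz: "y = 1 / (real (s n) + z)" "y' = 1 / (real (s' n) + z')"
    using cfval_shift_phi[OF assms(1), of n] cfval_shift_phi[OF assms(2), of n]
    y_def y'_def z_def z'_def by (auto simp: phi_def)
  define a where "a = real (s n)"
  have a: "a \<ge> 2" using assms(1) a_def by (metis of_nat_le_iff of_nat_numeral)
  have a': "real (s' n) \<ge> a + 1" using assms(4) a_def by simp
  have "y \<ge> 1 / (a + 1/2)" unfolding yz(1) a_def[symmetric] using z a by (intro divide_left_mono) auto
  moreover have "y' \<le> 1 / (a + 1)" unfolding yz(2) using z a a' by (intro divide_left_mono) auto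
  ultimately have "y - y' \<ge> 1 / (a + 1/2) - 1 / (a + 1)" by linarith
  moreover have "1 / (a + 1/2) - 1 / (a + 1) = 1 / (2 * (a + 1/2) * (a + 1))" using a
    by (simp add: field_split_simps)
  moreover have "1 / (2 * (a + 1/2) * (a + 1)) \<ge> 1 / (2 * (a + 1)^2)" using a
    by (intro divide_left_mono) (auto simp: power2_eq_square)
  ultimately have yy: "\<bar>y - y'\<bar> \<ge> 1 / (2 * (a + 1)^2)" by linarith
  have "cfval s = Phi s n y" using cfval_Phi[OF assms(1)] y_def by simp
  moreover have "cfval s' = Phi s n y'" using cfval_Phi[OF assms(2)] y'_def Phi_cong[OF assms(3)] by simp
  ultimately have "\<bar>y - y'\<bar> * (\<Prod>t<n. 1 / (real (s t) + 1)^2) \<le> \<bar>cfval s - cfval s'\<bar>"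
    using Phi_lip_lower[OF g1 y] by simp
  moreover have "(\<Prod>t<n. 1 / (real (s t) + 1)^2) * (1 / (2 * (real (s n) + 1)^2)) \<le>
      \<bar>y - y'\<bar> * (\<Prod>t<n. 1 / (real (s t) + 1)^2)"
    using yy a_def by (subst mult.commute) (intro mult_right_mono prod_nonneg, auto)
  ultimately show ?thesis by linarith
qed

definition Wd :: "(nat \<Rightarrow> nat) \<Rightarrow> nat \<Rightarrow> nat list set" where
  "Wd m L = {w. length w = L \<and> (\<forall>i<L. w ! i < m i)}"

lemma Wd_Suc: "Wd m (Suc L) = (\<lambda>(w, a). w @ [a]) ` (Wd m L \<times> {..<m L})"
proof (intro equalityI subsetI)
  fix v assume v: "v \<in> Wd m (Suc L)"
  then have lv: "length v = Suc L" and vi: "\<forall>i<Suc L. v ! i < m i" unfolding Wd_def by auto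
  define w where "w = butlast v"
  define a where "a = last v"
  have wa: "v = w @ [a]" using lv unfolding w_def a_def
    by (metis append_butlast_last_id list.size(3) nat.distinct(1))
  have lw: "length w = L" using lv w_def by simp
  have "\<forall>i<L. w ! i < m i"
  proof (intro allI impI)
    fix i assume "i < L"
    then have "v ! i = w ! i" using wa lw by (simp add: nth_append)
    then show "w ! i < m i" using vi \<open>i < L\<close> by (metis less_SucI)
  qed
  moreover have "a < m L" using vi wa lw by (metis lessI nth_append_length)
  ultimately show "v \<in> (\<lambda>(w, a). w @ [a]) ` (Wd m L \<times> {..<m L})"
    using wa lw unfolding Wd_def by (intro image_eqI[of _ _ "(w, a)"]) auto
next
  fix v assume "v \<in> (\<lambda>(w, a). w @ [a]) ` (Wd m L \<times> {..<m L})"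
  then obtain w a where "v = w @ [a]" "w \<in> Wd m L" "a < m L" by auto
  then show "v \<in> Wd m (Suc L)" unfolding Wd_def by (auto simp: nth_append less_Suc_eq)
qed
lemma inj_snoc: "inj_on (\<lambda>(w, a). w @ [a]) X"
  by (auto simp: inj_on_def)

lemma finite_Wd: "finite (Wd m L)"
proof (induction L)
  case 0
  have "Wd m 0 = {[]}" unfolding Wd_def by auto
  then show ?case by simp
next
  case (Suc L) then show ?case unfolding Wd_Suc by auto
qed

lemma ext_count:
  assumes "G \<subseteq> Wd m k" "k \<le> L"
  shows "card {w \<in> Wd m L. take k w \<in> G} = card G * (\<Prod>i\<in>{k..<L}. m i)"
  using assms(2)
proof (induction L rule: dec_induct)
  case base
  have "{w \<in> Wd m k. take k w \<in> G} = G" using assms(1) unfolding Wd_def by auto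
  then show ?case by simp
next
  case (step L)
  have e: "{w \<in> Wd m (Suc L). take k w \<in> G} =
      (\<lambda>(w, a). w @ [a]) ` ({w \<in> Wd m L. take k w \<in> G} \<times> {..<m L})"
    using step.hyps(1) unfolding Wd_Suc by (auto simp: Wd_def image_iff)
  have "card {w \<in> Wd m (Suc L). take k w \<in> G} = card ({w \<in> Wd m L. take k w \<in> G} \<times> {..<m L})"
    unfolding e by (rule card_image[OF inj_snoc])
  also have "\<dots> = card G * (\<Prod>i\<in>{k..<L}. m i) * m L" using step.IH by (simp add: card_cartesian_product)
  also have "\<dots> = card G * (\<Prod>i\<in>{k..<Suc L}. m i)" using step.hyps(1) by (simp add: prod.atLeastLessThan_Suc)
  finally show ?case .
qed

lemma card_Wd: "card (Wd m L) = (\<Prod>i<L. m i)"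
proof -
  have "card {w \<in> Wd m L. take 0 w \<in> Wd m 0} = card (Wd m 0) * (\<Prod>i\<in>{0..<L}. m i)"
    by (rule ext_count) auto
  moreover have "Wd m 0 = {[]}" unfolding Wd_def by auto
  ultimately show ?thesis by (simp add: atLeast0LessThan)
qed

lemma card_Wd_split:
  assumes "k \<le> L"
  shows "card (Wd m L) = card (Wd m k) * (\<Prod>i\<in>{k..<L}. m i)"
proof -
  have "{w \<in> Wd m L. take k w \<in> Wd m k} = Wd m L" using assms unfolding Wd_def by auto
  then show ?thesis using ext_count[of "Wd m k" m k L] assms by simp
qed

definition pref :: "nat \<Rightarrow> (nat \<Rightarrow> nat) \<Rightarrow> nat list" where "pref L c = map c [0..<L]"

lemma pref_Wd: "\<forall>i. c i < m i \<Longrightarrow> pref L c \<in> Wd m L"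
  unfolding pref_def Wd_def by auto

lemma take_pref: "k \<le> L \<Longrightarrow> take k (pref L c) = pref k c"
  unfolding pref_def by (simp add: take_map)

lemma pref_eq_iff: "pref L c = pref L c' \<longleftrightarrow> (\<forall>i<L. c i = c' i)"
  unfolding pref_def by (auto simp: list_eq_iff_nth_eq)

lemma Wd_extend:
  assumes "w \<in> Wd m L" "\<forall>i. m i \<ge> 1"
  shows "\<exists>c. (\<forall>i. c i < m i) \<and> pref L c = w"
proof -
  define c where "c i = (if i < L then w ! i else 0)" for i
  have "\<forall>i. c i < m i" using assms unfolding c_def Wd_def by (auto simp: Suc_le_eq)
  moreover have "pref L c = w" using assms unfolding c_def Wd_def pref_def
    by (auto simp: list_eq_iff_nth_eq)
  ultimately show ?thesis by blast
qed

lemma sorted_spread: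
  fixes Y :: "real set"
  assumes "finite Y" "Y \<noteq> {}" "\<forall>y\<in>Y. \<forall>y'\<in>Y. y \<noteq> y' \<longrightarrow> e \<le> \<bar>y - y'\<bar>"
  shows "\<exists>y\<in>Y. \<exists>y'\<in>Y. real (card Y - 1) * e \<le> y' - y"
proof -
  define xs where "xs = sorted_list_of_set Y"
  have sw: "sorted_wrt (<) xs" unfolding xs_def by simp
  have len: "length xs = card Y" unfolding xs_def by simp
  have setxs: "set xs = Y" unfolding xs_def using assms by simp
  have step: "xs ! Suc i - xs ! i \<ge> e" if "Suc i < length xs" for i
  proof -
    have "xs ! i < xs ! Suc i" using sw that by (simp add: sorted_wrt_iff_nth_less)
    moreover have "xs ! i \<in> Y" "xs ! Suc i \<in> Y" using that setxs by auto
    ultimately show ?thesis using assms(3) by force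
  qed
  have J: "j < length xs \<Longrightarrow> xs ! j - xs ! 0 \<ge> real j * e" for j
  proof (induction j)
    case 0 then show ?case by simp
  next
    case (Suc j)
    then have "xs ! j - xs ! 0 \<ge> real j * e" by simp
    moreover have "xs ! Suc j - xs ! j \<ge> e" using step Suc.prems by simp
    ultimately show ?case by (simp add: algebra_simps)
  qed
  have "card Y \<ge> 1" using assms by (simp add: Suc_le_eq card_gt_0_iff)
  then have cl: "card Y - 1 < length xs" using len by simp
  then have "xs ! (card Y - 1) - xs ! 0 \<ge> real (card Y - 1) * e" by (rule J)
  moreover have "xs ! (card Y - 1) \<in> Y" using nth_mem[OF cl] setxs by simp
  moreover have "xs ! 0 \<in> Y" using nth_mem[of 0 xs] setxs cl by (cases xs) auto
  ultimately show ?thesis by blast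
qed

lemma take_Wd: "w \<in> Wd m L \<Longrightarrow> k \<le> L \<Longrightarrow> take k w \<in> Wd m k"
  unfolding Wd_def by auto

locale cantor =
  fixes m :: "nat \<Rightarrow> nat" and f :: "(nat \<Rightarrow> nat) \<Rightarrow> real" and eps :: "nat \<Rightarrow> real"
    and s c0 :: real
  assumes m_pos: "\<forall>i. m i \<ge> 1"
    and cpt: "compact (f ` {c. \<forall>i. c i < m i})"
    and sep: "\<And>k c c'. \<forall>i. c i < m i \<Longrightarrow> \<forall>i. c' i < m i \<Longrightarrow> \<exists>i<k. c i \<noteq> c' i
                 \<Longrightarrow> eps k \<le> \<bar>f c - f c'\<bar>"
    and eps_pos: "\<forall>k. eps k > 0" and eps0: "eps 0 > 1/4" and eps_small: "\<forall>r>0. \<exists>k. eps k \<le> r"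
    and mass: "\<forall>k\<ge>1. c0 \<le> (\<Prod>i<k-1. real (m i)) * eps k powr s"
    and s_pos: "0 < s" and s_le1: "s \<le> 1" and c0_pos: "c0 > 0"
begin

definition PP where "PP = {c. \<forall>i. c i < m i}"
definition piece where "piece L w = f ` {c \<in> PP. pref L c = w}"
definition NN where "NN k V = {w \<in> Wd m k. piece k w \<inter> V \<noteq> {}}"

lemma piece_sep:
  assumes "w \<in> Wd m k" "w' \<in> Wd m k" "w \<noteq> w'" "x \<in> piece k w" "x' \<in> piece k w'"
  shows "eps k \<le> \<bar>x - x'\<bar>"
proof -
  obtain c c' where c: "c \<in> PP" "pref k c = w" "x = f c" "c' \<in> PP" "pref k c' = w'" "x' = f c'"
    using assms(4,5) unfolding piece_def by auto
  then have "\<exists>i<k. c i \<noteq> c' i" using assms(3) pref_eq_iff by metis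
  then show ?thesis using sep c unfolding PP_def by auto
qed

lemma piece_sub:
  assumes "k \<le> L"
  shows "piece L w \<subseteq> piece k (take k w)"
  unfolding piece_def using take_pref[OF assms] by auto

lemma NN_sub: "NN k V \<subseteq> Wd m k" unfolding NN_def by auto

lemma card_pos_Wd: "card (Wd m L) > 0"
  using m_pos unfolding card_Wd by (simp add: Suc_le_eq)

lemma NN_prev_card:
  assumes "\<forall>x\<in>V. \<forall>y\<in>V. \<bar>x - y\<bar> < r" "r < eps k"
  shows "card (NN k V) \<le> 1"
proof -
  have "\<forall>w\<in>NN k V. \<forall>w'\<in>NN k V. w = w'"
  proof (intro ballI, rule ccontr)
    fix w w' assume w: "w \<in> NN k V" "w' \<in> NN k V" "w \<noteq> w'"
    then obtain x x' where "x \<in> piece k w \<inter> V" "x' \<in> piece k w' \<inter> V" unfolding NN_def by blast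
    then have "eps k \<le> \<bar>x - x'\<bar>" "\<bar>x - x'\<bar> < r" using piece_sep[of w k w' x x'] w assms(1)
      unfolding NN_def by auto
    then show False using assms(2) by simp
  qed
  then show ?thesis by (simp add: card_le_Suc0_iff_eq finite_subset[OF NN_sub finite_Wd])
qed

lemma NN_spread_card:
  assumes "\<forall>x\<in>V. \<forall>y\<in>V. \<bar>x - y\<bar> < r" "eps k \<le> r"
  shows "real (card (NN k V)) \<le> 2 * r / eps k"
proof (cases "NN k V = {}")
  case True
  have "0 < eps k" using eps_pos by simp
  then have "0 \<le> r" using assms(2) by simp
  then show ?thesis using True \<open>0 < eps k\<close> by simp
next
  case False
  define g where "g w = (SOME x. x \<in> piece k w \<inter> V)" for w
  have g: "g w \<in> piece k w \<inter> V" if "w \<in> NN k V" for w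
  proof -
    have "\<exists>x. x \<in> piece k w \<inter> V" using that unfolding NN_def by blast
    then show ?thesis unfolding g_def by (rule someI_ex)
  qed
  have fin: "finite (NN k V)" using finite_subset[OF NN_sub finite_Wd] .
  have gsep: "eps k \<le> \<bar>g w - g w'\<bar>" if "w \<in> NN k V" "w' \<in> NN k V" "w \<noteq> w'" for w w'
  proof -
    have "w \<in> Wd m k" "w' \<in> Wd m k" using that NN_sub by auto
    moreover have "g w \<in> piece k w" "g w' \<in> piece k w'" using g that by auto
    ultimately show ?thesis using piece_sep that(3) by blast
  qed
  have inj: "inj_on g (NN k V)"
  proof (rule inj_onI, rule ccontr)
    fix w w' assume "w \<in> NN k V" "w' \<in> NN k V" "g w = g w'" "w \<noteq> w'"
    then have "eps k \<le> \<bar>g w - g w'\<bar>" using gsep by blast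
    then show False using eps_pos[rule_format, of k] \<open>g w = g w'\<close> by simp
  qed
  define Y where "Y = g ` NN k V"
  have cY: "card Y = card (NN k V)" unfolding Y_def using card_image[OF inj] .
  have Ysep: "\<forall>y\<in>Y. \<forall>y'\<in>Y. y \<noteq> y' \<longrightarrow> eps k \<le> \<bar>y - y'\<bar>"
    unfolding Y_def using gsep by auto
  obtain y y' where yy: "y \<in> Y" "y' \<in> Y" "real (card Y - 1) * eps k \<le> y' - y"
    using sorted_spread[of Y "eps k"] Ysep fin False unfolding Y_def by blast
  have "y \<in> V" "y' \<in> V" using yy g unfolding Y_def by auto
  then have "y' - y < r" using assms(1) by fastforce
  then have "real (card Y - 1) * eps k < r" using yy by linarith
  moreover have "card Y \<ge> 1" using False fin cY by (simp add: Suc_le_eq card_gt_0_iff)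
  ultimately have "(real (card Y) - 1) * eps k < r" by (simp add: of_nat_diff)
  then have "real (card Y) * eps k < r + eps k" by (simp add: algebra_simps)
  also have "\<dots> \<le> 2 * r" using assms(2) by simp
  finally show ?thesis using cY eps_pos by (simp add: field_simps)
qed

lemma min_powr_le:
  fixes a b :: real
  assumes "0 < a" "0 < b" "0 \<le> s" "s \<le> 1"
  shows "min a b \<le> a powr (1 - s) * b powr s"
proof -
  have "min a b = min a b powr (1 - s) * min a b powr s"
    using assms by (simp add: powr_add[symmetric])
  also have "\<dots> \<le> a powr (1 - s) * b powr s"
    using assms by (intro mult_mono powr_mono2) auto
  finally show ?thesis .
qed

lemma NN_mass:
  assumes V: "\<forall>x\<in>V. \<forall>y\<in>V. \<bar>x - y\<bar> < r" and r: "0 < r" "r < eps 0"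
    and k: "k = (LEAST k. eps k \<le> r)" and L: "k \<le> L"
  shows "real (card (NN L V)) / real (card (Wd m L)) \<le> (2 * r) powr s / c0"
proof -
  have ex: "\<exists>k. eps k \<le> r" using eps_small r by auto
  have ek: "eps k \<le> r" using LeastI_ex[OF ex] k by simp
  have k1: "k \<ge> 1" using ek r by (cases k) auto
  have ek1: "r < eps (k - 1)" using not_less_Least[of "k - 1" "\<lambda>k. eps k \<le> r"] k k1 by force
  define M where "M = m (k - 1)"
  define A where "A = card (Wd m (k - 1))"
  have M1: "M \<ge> 1" using m_pos M_def by simp
  have A1: "A > 0" using card_pos_Wd A_def by simp
  have kk: "{k-1..<k} = {k-1}" using k1 by auto
  have cWk: "card (Wd m k) = A * M"
    using card_Wd_split[of "k - 1" k m] k1 A_def M_def kk by simp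
  have sub1: "NN k V \<subseteq> {w \<in> Wd m k. take (k - 1) w \<in> NN (k - 1) V}"
  proof
    fix w assume w: "w \<in> NN k V"
    then obtain x where x: "x \<in> piece k w" "x \<in> V" unfolding NN_def by blast
    have "x \<in> piece (k - 1) (take (k - 1) w)" using piece_sub[of "k - 1" k w] x by auto
    moreover have "w \<in> Wd m k" using w NN_sub by auto
    then have "take (k - 1) w \<in> Wd m (k - 1)" by (rule take_Wd) simp
    ultimately show "w \<in> {w \<in> Wd m k. take (k - 1) w \<in> NN (k - 1) V}"
      using w x NN_sub unfolding NN_def by blast
  qed
  have "card (NN k V) \<le> card {w \<in> Wd m k. take (k - 1) w \<in> NN (k - 1) V}"
    by (rule card_mono[OF _ sub1]) (simp add: finite_Wd)
  also have "\<dots> = card (NN (k - 1) V) * (\<Prod>i\<in>{k-1..<k}. m i)"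
    by (rule ext_count[OF NN_sub]) simp
  also have "\<dots> \<le> 1 * M"
    using NN_prev_card[OF V ek1] k1 M_def kk by (intro mult_mono) auto
  finally have c1: "real (card (NN k V)) \<le> real M" by simp
  have c2: "real (card (NN k V)) \<le> 2 * r / eps k" by (rule NN_spread_card[OF V ek])
  define b where "b = 2 * r / eps k"
  have b: "b > 0" using r eps_pos b_def by simp
  have cNk: "real (card (NN k V)) \<le> real M powr (1 - s) * b powr s"
    using min_powr_le[of "real M" b] c1 c2 M1 b s_pos s_le1 b_def by simp
  have subL: "NN L V \<subseteq> {w \<in> Wd m L. take k w \<in> NN k V}"
  proof
    fix w assume w: "w \<in> NN L V"
    then obtain x where x: "x \<in> piece L w" "x \<in> V" unfolding NN_def by blast
    have "x \<in> piece k (take k w)" using piece_sub[OF L, of w] x by auto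
    moreover have "w \<in> Wd m L" using w NN_sub by auto
    then have "take k w \<in> Wd m k" using L by (rule take_Wd)
    ultimately show "w \<in> {w \<in> Wd m L. take k w \<in> NN k V}"
      using w x NN_sub unfolding NN_def by blast
  qed
  define Q where "Q = (\<Prod>i\<in>{k..<L}. m i)"
  have Q: "Q > 0" using m_pos Q_def by (simp add: Suc_le_eq)
  have "card (NN L V) \<le> card {w \<in> Wd m L. take k w \<in> NN k V}"
    by (rule card_mono[OF _ subL]) (simp add: finite_Wd)
  also have "\<dots> = card (NN k V) * Q" unfolding Q_def by (rule ext_count[OF NN_sub L])
  finally have cL: "real (card (NN L V)) \<le> real (card (NN k V)) * real Q"
    by (metis of_nat_le_iff of_nat_mult)
  have cWL: "card (Wd m L) = A * M * Q" using card_Wd_split[OF L, of m] cWk Q_def by simp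
  have "real (card (NN L V)) / real (card (Wd m L)) \<le> real (card (NN k V)) * real Q / (real A * real M * real Q)"
  proof -
    have "real (card (Wd m L)) = real A * real M * real Q" using cWL by simp
    then show ?thesis using A1 M1 Q by (simp only:) (rule divide_right_mono[OF cL], auto)
  qed
  also have "\<dots> = real (card (NN k V)) / (real A * real M)" using Q by simp
  also have "\<dots> \<le> (real M powr (1 - s) * b powr s) / (real A * real M)"
    using cNk A1 M1 by (intro divide_right_mono) auto
  also have "\<dots> = b powr s / (real A * real M powr s)"
  proof -
    have "real M = real M powr (1 - s) * real M powr s" using M1 by (simp add: powr_add[symmetric])
    then show ?thesis using M1 A1 by (simp add: field_simps)
  qed
  also have "\<dots> \<le> b powr s / real A"
  proof -
    have "real M powr s \<ge> 1" using M1 s_pos by (simp add: ge_one_powr_ge_zero)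
    then show ?thesis using A1 b M1 by (intro divide_left_mono) (auto intro!: mult_pos_pos)
  qed
  also have "\<dots> = (2 * r) powr s / (real A * eps k powr s)"
    unfolding b_def using r eps_pos by (simp add: powr_divide)
  also have "\<dots> \<le> (2 * r) powr s / c0"
  proof -
    have "c0 \<le> real A * eps k powr s" using mass k1 A_def card_Wd by simp
    then show ?thesis using c0_pos by (intro divide_left_mono) auto
  qed
  finally show ?thesis .
qed


lemma cover_finite:
  assumes op: "\<forall>i. open (V i)" and r: "\<forall>i. 0 < r i \<and> r i < eps 0"
    and Vr: "\<forall>i. \<forall>x\<in>V i. \<forall>y\<in>V i. \<bar>x - y\<bar> < r i" and cov: "f ` PP \<subseteq> (\<Union>i. V i)"
  shows "\<exists>D. finite D \<and> c0 \<le> (\<Sum>i\<in>D. (2 * r i) powr s)"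
proof -
  have cK: "compact (f ` PP)" using cpt unfolding PP_def .
  obtain D where D: "finite D" "f ` PP \<subseteq> \<Union>(V ` D)"
    using compactE_image[OF cK, of UNIV V] op cov by auto
  define k where "k i = (LEAST k. eps k \<le> r i)" for i
  define L where "L = Max (insert 0 (k ` D))"
  have kL: "k i \<le> L" if "i \<in> D" for i unfolding L_def using D(1) that by auto
  have cover: "Wd m L \<subseteq> (\<Union>i\<in>D. NN L (V i))"
  proof
    fix w assume w: "w \<in> Wd m L"
    obtain c where c: "\<forall>i. c i < m i" "pref L c = w" using Wd_extend[OF w m_pos] by blast
    then have cP: "c \<in> PP" unfolding PP_def by simp
    then obtain i where i: "i \<in> D" "f c \<in> V i" using D(2) by blast
    have "f c \<in> piece L w" unfolding piece_def using cP c by auto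
    then show "w \<in> (\<Union>i\<in>D. NN L (V i))" using i w unfolding NN_def by blast
  qed
  have "card (Wd m L) \<le> card (\<Union>i\<in>D. NN L (V i))"
    by (rule card_mono[OF _ cover]) (use D(1) finite_subset[OF NN_sub finite_Wd] in auto)
  also have "\<dots> \<le> (\<Sum>i\<in>D. card (NN L (V i)))" by (rule card_UN_le[OF D(1)])
  finally have "real (card (Wd m L)) \<le> (\<Sum>i\<in>D. real (card (NN L (V i))))"
    by (metis of_nat_le_iff of_nat_sum)
  then have "1 \<le> (\<Sum>i\<in>D. real (card (NN L (V i)))) / real (card (Wd m L))"
    using card_pos_Wd[of L] by simp
  also have "\<dots> = (\<Sum>i\<in>D. real (card (NN L (V i))) / real (card (Wd m L)))"
    by (simp add: sum_divide_distrib)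
  also have "\<dots> \<le> (\<Sum>i\<in>D. (2 * r i) powr s / c0)"
  proof (rule sum_mono)
    fix i assume "i \<in> D"
    show "real (card (NN L (V i))) / real (card (Wd m L)) \<le> (2 * r i) powr s / c0"
      by (rule NN_mass[of "V i" "r i" "k i" L]) (use Vr r kL \<open>i \<in> D\<close> k_def in auto)
  qed
  also have "\<dots> = (\<Sum>i\<in>D. (2 * r i) powr s) / c0" by (simp add: sum_divide_distrib)
  finally have "c0 \<le> (\<Sum>i\<in>D. (2 * r i) powr s)" using c0_pos by (simp add: field_simps)
  then show ?thesis using D(1) by blast
qed

lemma geom_half_sum: "finite D \<Longrightarrow> (\<Sum>i\<in>D. (1/2::real) ^ Suc i) \<le> 1"
proof -
  assume D: "finite D"
  have sm: "summable (\<lambda>i. (1/2::real) ^ Suc i)" by (simp add: summable_geometric_iff)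
  have "(\<Sum>i\<in>D. (1/2::real) ^ Suc i) \<le> (\<Sum>i. (1/2::real) ^ Suc i)"
    by (rule sum_le_suminf[OF sm D]) auto
  also have "(\<Sum>i. (1/2::real) ^ Suc i) = 1" using power_half_series sums_unique by metis
  finally show ?thesis .
qed

lemma hausdorff_pre_lower:
  assumes E: "f ` PP \<subseteq> E"
  shows "ennreal (c0 / (2 * 4 powr s)) \<le> hausdorff_pre s (1/8) E"
  unfolding hausdorff_pre_def
proof (rule INF_greatest)
  fix U :: "nat \<Rightarrow> real set"
  assume "U \<in> {U. E \<subseteq> (\<Union>i. U i) \<and> (\<forall>i. bounded (U i) \<and> diameter (U i) \<le> 1/8)}"
  then have cov: "E \<subseteq> (\<Union>i. U i)" and bd: "\<And>i. bounded (U i)" and dm: "\<And>i. diameter (U i) \<le> 1/8"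
    by auto
  define e' where "e' = c0 / (2 * 4 powr s)"
  have e': "e' > 0" using c0_pos e'_def by simp
  define d where "d i = diameter (U i)" for i
  have d0: "d i \<ge> 0" for i unfolding d_def by (simp add: diameter_ge_0[OF bd])
  define \<rho> where "\<rho> i = min (1/8) ((e' / 2 ^ Suc i) powr (1/s))" for i
  have \<rho>pos: "\<rho> i > 0" for i unfolding \<rho>_def using e' by simp
  have \<rho>s: "\<rho> i powr s \<le> e' * (1/2) ^ Suc i" for i
  proof -
    have "\<rho> i powr s \<le> ((e' / 2 ^ Suc i) powr (1/s)) powr s"
      unfolding \<rho>_def using e' s_pos by (intro powr_mono2) auto
    also have "\<dots> = e' / 2 ^ Suc i" using s_pos e' by (simp add: powr_powr)
    also have "e' / 2 ^ Suc i = e' * (1/2) ^ Suc i" by (simp only: power_one_over) simp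
    finally show ?thesis .
  qed
  define M where "M i = max (d i) (\<rho> i)" for i
  have Mpos: "M i > 0" for i unfolding M_def using \<rho>pos[of i] by linarith
  have Mle: "M i \<le> 1/8" for i unfolding M_def \<rho>_def d_def using dm[of i] by auto
  define V where "V i = (\<Union>x\<in>U i. ball x (M i / 2))" for i
  define r where "r i = 2 * M i" for i
  have op: "\<forall>i. open (V i)" unfolding V_def by auto
  have rr: "\<forall>i. 0 < r i \<and> r i < eps 0" unfolding r_def using Mpos Mle eps0 by (auto, smt (verit))
  have Vr: "\<forall>i. \<forall>x\<in>V i. \<forall>y\<in>V i. \<bar>x - y\<bar> < r i"
  proof (intro allI ballI)
    fix i x y assume "x \<in> V i" "y \<in> V i"
    then obtain a b where ab: "a \<in> U i" "b \<in> U i" "dist a x < M i / 2" "dist b y < M i / 2"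
      unfolding V_def by auto
    have "dist a b \<le> d i" unfolding d_def by (rule diameter_bounded_bound[OF bd ab(1,2)])
    then have "\<bar>x - y\<bar> < M i / 2 + d i + M i / 2" using ab unfolding dist_real_def by (smt (verit))
    also have "\<dots> \<le> r i" unfolding r_def M_def by simp
    finally show "\<bar>x - y\<bar> < r i" .
  qed
  have covV: "f ` PP \<subseteq> (\<Union>i. V i)"
  proof
    fix x assume "x \<in> f ` PP"
    then obtain i where "x \<in> U i" using E cov by blast
    then have "x \<in> V i" unfolding V_def using Mpos[of i] by (intro UN_I[of x]) auto
    then show "x \<in> (\<Union>i. V i)" by blast
  qed
  obtain D where D: "finite D" "c0 \<le> (\<Sum>i\<in>D. (2 * r i) powr s)"
    using cover_finite[OF op rr Vr covV] by blast
  have "(\<Sum>i\<in>D. (2 * r i) powr s) \<le> (\<Sum>i\<in>D. 4 powr s * (d i powr s + e' * (1/2) ^ Suc i))"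
  proof (rule sum_mono)
    fix i assume "i \<in> D"
    have "(2 * r i) powr s = 4 powr s * M i powr s" unfolding r_def using Mpos[of i]
      by (simp add: powr_mult)
    also have "M i powr s \<le> d i powr s + \<rho> i powr s"
      unfolding M_def using d0[of i] \<rho>pos[of i] s_pos
      by (cases "d i \<le> \<rho> i") (auto simp: max_def)
    then have "4 powr s * M i powr s \<le> 4 powr s * (d i powr s + e' * (1/2) ^ Suc i)"
      using \<rho>s[of i] by (intro mult_left_mono) auto
    finally show "(2 * r i) powr s \<le> 4 powr s * (d i powr s + e' * (1/2) ^ Suc i)" .
  qed
  also have "\<dots> = 4 powr s * ((\<Sum>i\<in>D. d i powr s) + e' * (\<Sum>i\<in>D. (1/2) ^ Suc i))"
    by (simp only: sum_distrib_left[symmetric] sum.distrib)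
  also have "\<dots> \<le> 4 powr s * ((\<Sum>i\<in>D. d i powr s) + e')"
    using geom_half_sum[OF D(1)] e' by (intro mult_left_mono add_left_mono) auto
  finally have "c0 \<le> 4 powr s * ((\<Sum>i\<in>D. d i powr s) + e')" using D(2) by linarith
  then have "c0 / 4 powr s \<le> (\<Sum>i\<in>D. d i powr s) + e'" by (simp add: field_simps)
  moreover have "c0 / 4 powr s = 2 * e'" unfolding e'_def by simp
  ultimately have sD: "e' \<le> (\<Sum>i\<in>D. d i powr s)" by linarith
  have "ennreal e' \<le> ennreal (\<Sum>i\<in>D. d i powr s)" using sD by (rule ennreal_leI)
  also have "\<dots> = (\<Sum>i\<in>D. ennreal (d i powr s))" by (rule sum_ennreal[symmetric]) simp
  also have "\<dots> \<le> (\<Sum>i. ennreal (d i powr s))" by (rule sum_le_suminf) (auto simp: D(1))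
  finally show "ennreal (c0 / (2 * 4 powr s)) \<le> (\<Sum>i. ennreal (diameter (U i) powr s))"
    unfolding e'_def d_def .
qed

lemma hausdorff_measure_pos:
  assumes E: "f ` PP \<subseteq> E"
  shows "hausdorff_measure s E \<noteq> 0"
proof -
  have "ennreal (c0 / (2 * 4 powr s)) \<le> hausdorff_pre s (1/8) E" by (rule hausdorff_pre_lower[OF E])
  also have "\<dots> \<le> hausdorff_measure s E" unfolding hausdorff_measure_def
    by (rule SUP_upper) auto
  moreover have "0 < c0 / (2 * 4 powr s)" using c0_pos by simp
  ultimately show ?thesis by (auto simp: ennreal_eq_0_iff)
qed

end

definition digs :: "(nat \<Rightarrow> nat) \<Rightarrow> nat \<Rightarrow> nat" where "digs c t = 2 + t + (\<Sum>u\<le>t. c u)"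

lemma digs_ge2: "\<forall>t. digs c t \<ge> 2" unfolding digs_def by simp

lemma digs_Suc: "digs c (Suc t) = digs c t + 1 + c (Suc t)" unfolding digs_def by simp

lemma digs_cong: "\<forall>u<n. c u = c' u \<Longrightarrow> t < n \<Longrightarrow> digs c t = digs c' t"
  unfolding digs_def by (intro arg_cong[where f="\<lambda>x. 2 + t + x"] sum.cong) auto

lemma dist_fun_ge_term:
  fixes c c' :: "nat \<Rightarrow> real"
  assumes "dist (c i) (c' i) \<ge> 1"
  shows "(1/2) ^ (to_nat i) \<le> dist c c'"
proof -
  define g where "g n = (1/2::real)^n * min (dist (c (from_nat n)) (c' (from_nat n))) 1" for n
  have sm: "summable g" unfolding g_def
    by (rule summable_comparison_test'[of "\<lambda>n. (1/2::real)^n"]) (auto simp add: summable_geometric_iff)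
  have "g (to_nat i) \<le> suminf g"
    using sum_le_suminf[OF sm, of "{to_nat i}"] unfolding g_def by auto
  moreover have "g (to_nat i) = (1/2)^(to_nat i)" unfolding g_def using assms by simp
  ultimately show ?thesis unfolding dist_fun_def g_def by simp
qed

definition PPr :: "(nat \<Rightarrow> nat) \<Rightarrow> (nat \<Rightarrow> real) set" where
  "PPr m = PiE UNIV (\<lambda>i. real ` {..<m i})"

lemma compact_PPr: "compact (PPr m)"
proof -
  have "compactin (product_topology (\<lambda>i. euclidean) UNIV) (PiE UNIV (\<lambda>i. real ` {..<m i}))"
    by (subst compactin_PiE) (auto simp: finite_imp_compact)
  then show ?thesis unfolding PPr_def euclidean_product_topology by (simp add: compactin_euclidean_iff)
qed

definition gK :: "(nat \<Rightarrow> real) \<Rightarrow> real" where "gK c = cfval (digs (\<lambda>i. nat \<lfloor>c i\<rfloor>))"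

lemma continuous_gK: "continuous_on (PPr m) gK"
proof (clarsimp simp: continuous_on_iff)
  fix c :: "nat \<Rightarrow> real" and e :: real assume e: "0 < e" and cP: "c \<in> PPr m"
  obtain n where n: "(1/4::real)^n < e" using real_arch_pow_inv[of e "1/4"] e by auto
  define N where "N = Max (to_nat ` {..<n})"
  have "(1/2::real)^N > 0" by simp
  moreover have "\<bar>gK c' - gK c\<bar> < e" if dd: "dist c' c < (1/2)^N" and c'P: "c' \<in> PPr m" for c'
  proof -
    have ag: "\<forall>i<n. nat \<lfloor>c' i\<rfloor> = nat \<lfloor>c i\<rfloor>"
    proof (intro allI impI, rule ccontr)
      fix i assume i: "i < n" "nat \<lfloor>c' i\<rfloor> \<noteq> nat \<lfloor>c i\<rfloor>"
      have "c' i \<in> real ` {..<m i}" "c i \<in> real ` {..<m i}"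
        using cP c'P unfolding PPr_def by (auto simp: PiE_def Pi_def)
      then obtain a b :: nat where ab: "c' i = real a" "c i = real b" by blast
      then have "a \<noteq> b" using i by auto
      then have "dist (c' i) (c i) \<ge> 1" using ab by (simp add: dist_real_def)
      have "to_nat i \<le> N" unfolding N_def using i by auto
      then have "(1/2::real)^N \<le> (1/2)^(to_nat i)" by (intro power_decreasing) auto
      also have "\<dots> \<le> dist c' c" by (rule dist_fun_ge_term) fact
      finally show False using dd by simp
    qed
    have "\<forall>t<n. digs (\<lambda>i. nat \<lfloor>c' i\<rfloor>) t = digs (\<lambda>i. nat \<lfloor>c i\<rfloor>) t" using digs_cong[OF ag] by blast
    then have "\<bar>gK c' - gK c\<bar> \<le> (1/4)^n" unfolding gK_def
      by (intro cfval_close digs_ge2)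
    then show ?thesis using n by simp
  qed
  ultimately show "\<exists>d>0. \<forall>x'\<in>PPr m. dist x' c < d \<longrightarrow> dist (gK x') (gK c) < e"
    unfolding dist_real_def[of "gK _"] by blast
qed

lemma K_eq: "(\<lambda>c. cfval (digs c)) ` {c::nat \<Rightarrow> nat. \<forall>i. c i < m i} = gK ` PPr m"
proof (intro equalityI subsetI)
  fix x assume "x \<in> (\<lambda>c. cfval (digs c)) ` {c::nat \<Rightarrow> nat. \<forall>i. c i < m i}"
  then obtain c where c: "\<forall>i. c i < m i" "x = cfval (digs c)" by auto
  have "(\<lambda>i. real (c i)) \<in> PPr m" using c unfolding PPr_def by (auto simp: PiE_def Pi_def)
  moreover have "gK (\<lambda>i. real (c i)) = x" unfolding gK_def c by simp
  ultimately show "x \<in> gK ` PPr m" by (metis image_eqI)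
next
  fix x assume "x \<in> gK ` PPr m"
  then obtain c where c: "c \<in> PPr m" "x = gK c" by auto
  have "nat \<lfloor>c i\<rfloor> < m i" for i
  proof -
    obtain a where "a < m i" "c i = real a" using c(1) unfolding PPr_def by (auto simp: PiE_def Pi_def)
    then show ?thesis by simp
  qed
  then show "x \<in> (\<lambda>c. cfval (digs c)) ` {c::nat \<Rightarrow> nat. \<forall>i. c i < m i}"
    using c unfolding gK_def by auto
qed

lemma compact_K: "compact ((\<lambda>c. cfval (digs c)) ` {c::nat \<Rightarrow> nat. \<forall>i. c i < m i})"
  unfolding K_eq by (rule compact_continuous_image[OF continuous_gK compact_PPr])

definition Hb :: "(nat \<Rightarrow> nat) \<Rightarrow> nat \<Rightarrow> nat" where "Hb m t = 2 + t + (\<Sum>u\<le>t. m u)"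

definition epsK :: "(nat \<Rightarrow> nat) \<Rightarrow> nat \<Rightarrow> real" where
  "epsK m k = (1/2) * (\<Prod>t<k. 1 / (real (Hb m t) + 1)^2)"

lemma prod_decr:
  fixes g :: "nat \<Rightarrow> real"
  assumes "\<forall>t. 0 \<le> g t \<and> g t \<le> 1" "a \<le> b"
  shows "prod g {..<b} \<le> prod g {..<a}"
  using assms(2)
proof (induction b rule: dec_induct)
  case base then show ?case by simp
next
  case (step b)
  have "prod g {..<Suc b} = prod g {..<b} * g b" by simp
  also have "\<dots> \<le> prod g {..<b}" using assms(1) by (intro mult_left_le) (auto intro: prod_nonneg)
  finally show ?case using step.IH by simp
qed

lemma digs_le_Hb:
  assumes "\<forall>u. c u < m u" shows "digs c t \<le> Hb m t"
proof -
  have "(\<Sum>u\<le>t. c u) \<le> (\<Sum>u\<le>t. m u)" by (rule sum_mono) (use assms in \<open>simp add: less_imp_le\<close>)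
  then show ?thesis unfolding digs_def Hb_def by simp
qed

lemma digs_split: "digs c j = 2 + j + (\<Sum>u<j. c u) + c j"
  unfolding digs_def by (simp add: lessThan_Suc_atMost[symmetric])

lemma sep_lower:
  assumes "\<forall>t\<le>j. s t \<le> Hb m t" "j < k"
  shows "epsK m k \<le> (\<Prod>t<j. 1 / (real (s t) + 1)^2) * (1 / (2 * (real (s j) + 1)^2))"
proof -
  let ?g = "\<lambda>t. 1 / (real (Hb m t) + 1)^2"
  have g01: "\<forall>t. 0 \<le> ?g t \<and> ?g t \<le> 1" by (auto simp: divide_simps)
  have A: "epsK m k \<le> (1/2) * prod ?g {..<Suc j}" unfolding epsK_def
    using prod_decr[OF g01, of "Suc j" k] assms(2) by simp
  have B: "prod ?g {..<Suc j} \<le> (\<Prod>t<Suc j. 1 / (real (s t) + 1)^2)"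
  proof (rule prod_mono)
    fix t assume "t \<in> {..<Suc j}"
    then have "real (s t) \<le> real (Hb m t)" using assms(1) by simp
    then have "(real (s t) + 1)^2 \<le> (real (Hb m t) + 1)^2" by (intro power_mono) auto
    then show "0 \<le> ?g t \<and> ?g t \<le> 1 / (real (s t) + 1)^2"
      by (auto intro!: divide_left_mono)
  qed
  have "epsK m k \<le> (1/2) * (\<Prod>t<Suc j. 1 / (real (s t) + 1)^2)" using A B by linarith
  also have "\<dots> = (\<Prod>t<j. 1 / (real (s t) + 1)^2) * (1 / (2 * (real (s j) + 1)^2))"
    by (simp add: prod.lessThan_Suc)
  finally show ?thesis .
qed

lemma sep_K:
  assumes c: "\<forall>i. c i < m i" and c': "\<forall>i. c' i < m i" and ex: "\<exists>i<k. c i \<noteq> c' i"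
  shows "epsK m k \<le> \<bar>cfval (digs c) - cfval (digs c')\<bar>"
proof -
  define j where "j = (LEAST i. c i \<noteq> c' i)"
  obtain i0 where i0: "i0 < k" "c i0 \<noteq> c' i0" using ex by blast
  have cj: "c j \<noteq> c' j" unfolding j_def using LeastI[of "\<lambda>i. c i \<noteq> c' i" i0] i0 by simp
  have jk: "j < k" using Least_le[of "\<lambda>i. c i \<noteq> c' i" i0] i0 unfolding j_def by simp
  have below: "\<forall>t<j. c t = c' t" unfolding j_def using not_less_Least by blast
  have dbelow: "\<forall>t<j. digs c t = digs c' t" using digs_cong[OF below] by blast
  have sumeq: "(\<Sum>u<j. c u) = (\<Sum>u<j. c' u)" using below by (intro sum.cong) auto
  have dj: "digs c j \<noteq> digs c' j" using cj sumeq by (simp add: digs_split)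
  show ?thesis
  proof (cases "digs c j < digs c' j")
    case True
    have "(\<Prod>t<j. 1 / (real (digs c t) + 1)^2) * (1 / (2 * (real (digs c j) + 1)^2))
        \<le> \<bar>cfval (digs c) - cfval (digs c')\<bar>"
      by (rule cfval_sep[OF digs_ge2 digs_ge2 dbelow True])
    moreover have "epsK m k \<le> (\<Prod>t<j. 1 / (real (digs c t) + 1)^2) * (1 / (2 * (real (digs c j) + 1)^2))"
      using sep_lower[OF _ jk] digs_le_Hb[OF c] by blast
    ultimately show ?thesis by linarith
  next
    case False
    then have lt: "digs c' j < digs c j" using dj by simp
    have dbelow': "\<forall>t<j. digs c' t = digs c t" using dbelow by simp
    have "(\<Prod>t<j. 1 / (real (digs c' t) + 1)^2) * (1 / (2 * (real (digs c' j) + 1)^2))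
        \<le> \<bar>cfval (digs c') - cfval (digs c)\<bar>"
      by (rule cfval_sep[OF digs_ge2 digs_ge2 dbelow' lt])
    moreover have "epsK m k \<le> (\<Prod>t<j. 1 / (real (digs c' t) + 1)^2) * (1 / (2 * (real (digs c' j) + 1)^2))"
      using sep_lower[OF _ jk] digs_le_Hb[OF c'] by blast
    ultimately show ?thesis by (simp add: abs_minus_commute)
  qed
qed

lemma epsK_pos: "epsK m k > 0"
  unfolding epsK_def by (intro mult_pos_pos prod_pos) auto

lemma epsK_0: "epsK m 0 = 1/2" unfolding epsK_def by simp

lemma epsK_small: "\<forall>r>0. \<exists>k. epsK m k \<le> r"
proof (intro allI impI)
  fix r :: real assume r: "r > 0"
  obtain k where k: "(1/4::real)^k < r" using real_arch_pow_inv[of r "1/4"] r by auto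
  have "(\<Prod>t<k. 1 / (real (Hb m t) + 1)^2) \<le> (\<Prod>t<k. (1/4::real))"
  proof (intro prod_mono conjI)
    fix t assume "t \<in> {..<k}"
    have "Hb m t \<ge> 2" unfolding Hb_def by simp
    then have h2: "real (Hb m t) \<ge> 2" by simp
    have "(real (Hb m t) + 1)^2 \<ge> 3^2" by (rule power_mono) (use h2 in linarith)+
    then show "1 / (real (Hb m t) + 1)^2 \<le> 1/4" by (simp add: divide_simps)
  qed auto
  then have "epsK m k \<le> (1/2) * (\<Prod>t<k. (1/4::real))" unfolding epsK_def by simp
  also have "\<dots> \<le> (1/4)^k" by simp
  finally show "\<exists>k. epsK m k \<le> r" using k by (intro exI[of _ k]) simp
qed

locale blocks =
  fixes \<nu> :: "nat \<Rightarrow> nat" and Nq :: "nat \<Rightarrow> nat" and lam \<kappa> :: real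
  assumes Nq_pos: "\<forall>j. Nq j \<ge> 1"
    and Nq_good: "\<forall>j. real (\<nu> (Nq j)) < lam * real (Nq j)"
    and Nq_gap: "\<forall>j. Nq (Suc j) \<ge> Nq j + \<nu> (Nq j) + 1"
    and Nq_sparse: "\<forall>j. real (Nq j - 1 + \<nu> (Nq j)) \<le> \<kappa> * real (Nq (Suc j) - 1)"
    and lam_pos: "lam > 0" and kap: "0 < \<kappa>" "\<kappa> < 1"
begin

definition p where "p j = Nq j - 1"
definition e where "e j = p j + \<nu> (Nq j)"
definition BB where "BB = {i. \<exists>j. p j < i \<and> i < e j}"
definition th where "th = (lam + \<kappa>) / (1 + lam)"

lemma e_lt_p: "e j < p (Suc j)"
  using Nq_gap[rule_format, of j] Nq_pos[rule_format, of j] unfolding e_def p_def by arith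

lemma p_le_e: "p j \<le> e j" unfolding e_def by simp

lemma p_smono: "strict_mono p"
  by (rule strict_monoI_Suc) (use e_lt_p p_le_e le_less_trans in blast)

lemma e_mono: "mono e"
proof (rule monoI)
  fix x y :: nat assume "x \<le> y"
  then show "e x \<le> e y"
  proof (induction y rule: dec_induct)
    case base then show ?case by simp
  next
    case (step n)
    have "e n \<le> e (Suc n)" using e_lt_p[of n] p_le_e[of "Suc n"] by simp
    then show ?case using step.IH by simp
  qed
qed

lemma th_facts: "th - \<kappa> = lam * (1 - th)" "lam * (1 - th) \<le> 1" "\<kappa> \<le> th" "th < 1" "0 \<le> th"
proof -
  have l: "1 + lam > 0" using lam_pos by simp
  show "th - \<kappa> = lam * (1 - th)" unfolding th_def using l by (simp add: field_simps)
  have "1 - th = (1 - \<kappa>) / (1 + lam)" unfolding th_def using l by (simp add: field_simps)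
  then have "lam * (1 - th) = lam * (1 - \<kappa>) / (1 + lam)" by simp
  also have "\<dots> \<le> 1" using l lam_pos kap by (simp add: divide_simps) (smt (verit) mult_le_cancel_left1)
  finally show "lam * (1 - th) \<le> 1" .
  show "th < 1" unfolding th_def using l kap by (simp add: divide_simps)
  show "0 \<le> th" unfolding th_def using l kap lam_pos by simp
  have "th - \<kappa> \<ge> 0" using \<open>th - \<kappa> = lam * (1 - th)\<close> \<open>th < 1\<close> lam_pos by simp
  then show "\<kappa> \<le> th" by simp
qed

lemma count_BB: "real (card (BB \<inter> {..<k})) \<le> th * real k"
proof (cases "k \<le> p 0")
  case True
  have "BB \<inter> {..<k} = {}"
  proof (intro equals0I)
    fix i assume "i \<in> BB \<inter> {..<k}"
    then obtain j where "p j < i" "i < k" unfolding BB_def by auto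
    moreover have "p 0 \<le> p j" using p_smono by (simp add: strict_mono_less_eq)
    ultimately show False using True by simp
  qed
  then show ?thesis using th_facts by simp
next
  case False
  have ex: "\<exists>j. k \<le> p (Suc j)"
    using seq_suble[OF p_smono, of "Suc k"] by (intro exI[of _ k]) simp
  define J where "J = (LEAST j. k \<le> p (Suc j))"
  have kJ: "k \<le> p (Suc J)" unfolding J_def using LeastI_ex[OF ex] .
  have pJ: "p J < k"
  proof (cases J)
    case 0 then show ?thesis using False by simp
  next
    case (Suc J')
    then have "\<not> k \<le> p (Suc J')" using not_less_Least[of J' "\<lambda>j. k \<le> p (Suc j)"] unfolding J_def by simp
    then show ?thesis using Suc by simp
  qed
  define Ej where "Ej = (if J = 0 then 0 else e (J - 1))"
  have sub: "BB \<inter> {..<k} \<subseteq> {..<Ej} \<union> {p J<..<min k (e J)}"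
  proof
    fix i assume i: "i \<in> BB \<inter> {..<k}"
    then obtain j where j: "p j < i" "i < e j" "i < k" unfolding BB_def by auto
    have "j \<le> J"
    proof (rule ccontr)
      assume "\<not> j \<le> J"
      then have "p (Suc J) \<le> p j" using p_smono by (simp add: strict_mono_less_eq)
      then show False using j kJ by simp
    qed
    show "i \<in> {..<Ej} \<union> {p J<..<min k (e J)}"
    proof (cases "j = J")
      case True then show ?thesis using j by simp
    next
      case False
      then have "j \<le> J - 1" "J \<ge> 1" using \<open>j \<le> J\<close> by auto
      then have "e j \<le> e (J - 1)" using e_mono by (simp add: monoD)
      then show ?thesis using j \<open>J \<ge> 1\<close> unfolding Ej_def by simp
    qed
  qed
  define X where "X = min k (e J) - Suc (p J)"
  have "card (BB \<inter> {..<k}) \<le> card ({..<Ej} \<union> {p J<..<min k (e J)})"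
    by (rule card_mono[OF _ sub]) simp
  also have "\<dots> \<le> card {..<Ej} + card {p J<..<min k (e J)}" by (rule card_Un_le)
  also have "\<dots> = Ej + X" unfolding X_def by simp
  finally have c1: "real (card (BB \<inter> {..<k})) \<le> real Ej + real X" by simp
  have Ejk: "real Ej \<le> \<kappa> * real (p J)"
  proof (cases J)
    case 0 then show ?thesis unfolding Ej_def using kap by simp
  next
    case (Suc J')
    then show ?thesis unfolding Ej_def using Nq_sparse[rule_format, of J'] unfolding e_def p_def by simp
  qed
  have "\<kappa> * real (p J) + real X \<le> th * real k"
  proof (cases "X = 0")
    case True
    have "\<kappa> * real (p J) \<le> th * real (p J)" using th_facts by (intro mult_right_mono) auto
    also have "\<dots> \<le> th * real k" using pJ th_facts by (intro mult_left_mono) auto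
    finally show ?thesis using True by simp
  next
    case False
    define u where "u = X + 1"
    have u1: "p J + u \<le> k" "u \<le> \<nu> (Nq J)" using False unfolding u_def X_def e_def by auto
    have Lb: "real (\<nu> (Nq J)) < lam * (real (p J) + 1)"
      using Nq_good[rule_format, of J] Nq_pos unfolding p_def by (simp add: of_nat_diff)
    have "(1 - th) * real u \<le> (1 - th) * real (\<nu> (Nq J))"
      using u1 th_facts by (intro mult_left_mono) auto
    also have "\<dots> \<le> (1 - th) * (lam * (real (p J) + 1))"
      using Lb th_facts by (intro mult_left_mono) auto
    also have "\<dots> = (th - \<kappa>) * real (p J) + lam * (1 - th)"
      unfolding th_facts(1) by (simp add: algebra_simps)
    also have "\<dots> \<le> (th - \<kappa>) * real (p J) + 1" using th_facts(2) by simp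
    finally have "(1 - th) * real u \<le> (th - \<kappa>) * real (p J) + 1" .
    then have "\<kappa> * real (p J) + real u - 1 \<le> th * (real (p J) + real u)"
      by (simp add: algebra_simps)
    also have "\<dots> \<le> th * real k" using u1 th_facts by (intro mult_left_mono) auto
    finally show ?thesis unfolding u_def by simp
  qed
  then show ?thesis using c1 Ejk by linarith
qed

end

lemma sum_ln_lower: "(\<Sum>t<k. ln (real t + 1)) \<ge> real k * ln (real k) - real k"
proof (induction k)
  case 0 then show ?case by simp
next
  case (Suc k)
  have step: "real k * ln (real k + 1) \<le> real k * ln (real k) + 1"
  proof (cases "k = 0")
    case True then show ?thesis by simp
  next
    case False
    then have kp: "real k > 0" by simp
    have e1: "1 + 1 / real k = (real k + 1) / real k" using kp by (simp add: field_simps)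
    have "ln (real k + 1) - ln (real k) = ln ((real k + 1) / real k)"
      using kp by (simp add: ln_div)
    also have "\<dots> = ln (1 + 1 / real k)" using e1 by simp
    finally have "ln (real k + 1) - ln (real k) = ln (1 + 1 / real k)" .
    also have "\<dots> \<le> 1 / real k" by (rule ln_add_one_self_le_self) simp
    finally have "real k * (ln (real k + 1) - ln (real k)) \<le> real k * (1 / real k)"
      using kp by (intro mult_left_mono) auto
    then show ?thesis using kp by (simp add: algebra_simps)
  qed
  have "(\<Sum>t<Suc k. ln (real t + 1)) = (\<Sum>t<k. ln (real t + 1)) + ln (real k + 1)" by simp
  also have "\<dots> \<ge> real k * ln (real k) - real k + ln (real k + 1)" using Suc.IH by simp
  finally show ?case using step by (simp add: algebra_simps)
qed

lemma sum_ln3_lower: "(\<Sum>t<k. ln (real t + 3)) \<ge> real k * ln (real k) - real k"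
proof -
  have "(\<Sum>t<k. ln (real t + 1)) \<le> (\<Sum>t<k. ln (real t + 3))" by (intro sum_mono) simp
  then show ?thesis using sum_ln_lower[of k] by linarith
qed

lemma asymp_ineq:
  fixes A Bc Q :: real
  assumes "Bc < A" "0 \<le> Bc" "0 \<le> Q"
  shows "\<exists>k0. \<forall>k\<ge>k0. (Bc * real k + Q) * ln (real k + 2) \<le> A * (real k * ln (real k) - real k)"
proof -
  define X where "X = (A + Bc + 2 * Q) / (A - Bc)"
  define k0 where "k0 = max 2 (nat \<lceil>exp X\<rceil>)"
  have "(Bc * real k + Q) * ln (real k + 2) \<le> A * (real k * ln (real k) - real k)" if k: "k \<ge> k0" for k
  proof -
    have k2: "real k \<ge> 2" using k unfolding k0_def by simp
    have "nat \<lceil>exp X\<rceil> \<le> k" using k unfolding k0_def by simp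
    then have "real (nat \<lceil>exp X\<rceil>) \<le> real k" by (simp only: of_nat_le_iff)
    moreover have "exp X \<le> real (nat \<lceil>exp X\<rceil>)" by (rule real_nat_ceiling_ge)
    ultimately have ek: "exp X \<le> real k" by linarith
    have "ln (exp X) \<le> ln (real k)" using ek k2 by (subst ln_le_cancel_iff) auto
    then have lnX: "ln (real k) \<ge> X" by simp
    have lk: "ln (real k) \<le> real k" using ln_le_minus_one[of "real k"] k2 by simp
    have lk0: "ln (real k) \<ge> 0" using k2 by simp
    have "ln (real k + 2) \<le> ln (2 * real k)" using k2 by simp
    also have "\<dots> = ln 2 + ln (real k)" using k2 by (simp add: ln_mult)
    also have "\<dots> \<le> 1 + ln (real k)" using ln_2_less_1 by simp
    finally have l2: "ln (real k + 2) \<le> 1 + ln (real k)" .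
    have "(Bc * real k + Q) * ln (real k + 2) \<le> (Bc * real k + Q) * (1 + ln (real k))"
      using l2 assms k2 by (intro mult_left_mono) auto
    also have "\<dots> = Bc * real k * ln (real k) + Bc * real k + Q * ln (real k) + Q"
      by (simp add: algebra_simps)
    also have "\<dots> \<le> Bc * real k * ln (real k) + Bc * real k + Q * real k + Q * real k"
    proof -
      have "Q * ln (real k) \<le> Q * real k" using lk assms by (intro mult_left_mono) auto
      moreover have "Q * 1 \<le> Q * real k" using k2 assms by (intro mult_left_mono) auto
      ultimately show ?thesis by simp
    qed
    finally have up: "(Bc * real k + Q) * ln (real k + 2) \<le> Bc * real k * ln (real k) + (Bc + 2 * Q) * real k"
      by (simp add: algebra_simps)
    have "(A - Bc) * ln (real k) \<ge> (A - Bc) * X" using lnX assms by (intro mult_left_mono) auto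
    also have "(A - Bc) * X = A + Bc + 2 * Q" unfolding X_def using assms by simp
    finally have "(A - Bc) * ln (real k) \<ge> A + Bc + 2 * Q" .
    then have "real k * ((A - Bc) * ln (real k)) \<ge> real k * (A + Bc + 2 * Q)"
      using k2 by (intro mult_left_mono) auto
    then show ?thesis using up by (simp add: algebra_simps)
  qed
  then show ?thesis by blast
qed

locale blocks_mass = blocks +
  fixes q :: nat and s :: real
  assumes q1: "q \<ge> 1" and s_pos: "0 < s" and s_le1: "s \<le> 1"
    and key: "real q * ((lam + \<kappa>) / (1 + lam)) < real q - 2 * s * (real q + 1)"
begin

definition mm where "mm i = (if i \<in> BB then 1 else (i + 3) ^ q)"

lemma mm_pos: "mm i \<ge> 1" unfolding mm_def by simp

lemma Hb_mm_nat: "Hb mm t + 1 \<le> (t + 3) ^ Suc q"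
proof -
  have b: "mm u \<le> (t + 3) ^ q" if "u \<le> t" for u
  proof (cases "u \<in> BB")
    case True then show ?thesis unfolding mm_def by simp
  next
    case False
    have "(u + 3) ^ q \<le> (t + 3) ^ q" using that by (intro power_mono) auto
    then show ?thesis using False unfolding mm_def by simp
  qed
  have "(\<Sum>u\<le>t. mm u) \<le> (\<Sum>u\<le>t. (t + 3) ^ q)" by (rule sum_mono) (use b in auto)
  also have "\<dots> = (t + 1) * (t + 3) ^ q" by simp
  finally have s1: "(\<Sum>u\<le>t. mm u) \<le> (t + 1) * (t + 3) ^ q" .
  have "t + 3 \<le> (t + 3) ^ q" using q1 by (intro self_le_power) auto
  then have "3 + t \<le> 2 * (t + 3) ^ q" by simp
  then have "Hb mm t + 1 \<le> (t + 1) * (t + 3) ^ q + 2 * (t + 3) ^ q" using s1 unfolding Hb_def by simp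
  also have "\<dots> = (t + 3) ^ Suc q" by (simp add: algebra_simps)
  finally show ?thesis .
qed

lemma ln_Hb_mm: "ln (real (Hb mm t) + 1) \<le> (real q + 1) * ln (real t + 3)"
proof -
  have "real (Hb mm t + 1) \<le> real ((t + 3) ^ Suc q)"
    using Hb_mm_nat[of t] by (simp only: of_nat_le_iff)
  then have "real (Hb mm t) + 1 \<le> (real t + 3) ^ Suc q" by simp
  then have "ln (real (Hb mm t) + 1) \<le> ln ((real t + 3) ^ Suc q)" by (subst ln_le_cancel_iff) auto
  also have "\<dots> = (real q + 1) * ln (real t + 3)" by (subst ln_realpow) simp
  finally show ?thesis .
qed

definition G where "G k = (\<Prod>i<k-1. real (mm i)) * epsK mm k powr s"

lemma G_pos: "G k > 0"
  unfolding G_def using mm_pos epsK_pos[of mm k]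
  by (intro mult_pos_pos prod_pos) (auto simp: Suc_le_eq)

lemma ln_epsK: "ln (epsK mm k) \<ge> - ln 2 - 2 * (real q + 1) * (\<Sum>t<k. ln (real t + 3))"
proof -
  have e1: "ln (epsK mm k) = ln (1/2) + ln (\<Prod>t<k. 1 / (real (Hb mm t) + 1)^2)"
    unfolding epsK_def by (rule ln_mult_pos) (auto intro!: prod_pos)
  have e2: "ln (\<Prod>t<k. 1 / (real (Hb mm t) + 1)^2) = (\<Sum>t<k. ln (1 / (real (Hb mm t) + 1)^2))"
    by (rule ln_prod) auto
  have e3: "(\<Sum>t<k. ln (1 / (real (Hb mm t) + 1)^2)) = (\<Sum>t<k. - 2 * ln (real (Hb mm t) + 1))"
    by (intro sum.cong refl) (simp add: ln_div ln_realpow)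
  have i4: "(\<Sum>t<k. - 2 * ln (real (Hb mm t) + 1)) \<ge> (\<Sum>t<k. - 2 * ((real q + 1) * ln (real t + 3)))"
    using ln_Hb_mm by (intro sum_mono) simp
  have e5: "(\<Sum>t<k. - 2 * ((real q + 1) * ln (real t + 3))) = - 2 * (real q + 1) * (\<Sum>t<k. ln (real t + 3))"
    unfolding sum_distrib_left by (simp only: mult.assoc)
  have e6: "ln (1/2::real) = - ln 2" by (simp add: ln_div)
  show ?thesis using e1 e2 e3 i4 e5 e6 by linarith
qed

lemma ln_prod_mm:
  assumes k: "k \<ge> 1"
  shows "ln (\<Prod>i<k-1. real (mm i)) \<ge> real q * ((\<Sum>t<k. ln (real t + 3)) - ln (real k + 2))
           - real q * ln (real k + 2) * (th * real k)"
proof -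
  define c where "c = real q * ln (real k + 2)"
  have e1: "ln (\<Prod>i<k-1. real (mm i)) = (\<Sum>i<k-1. ln (real (mm i)))"
    by (rule ln_prod) (use mm_pos in \<open>auto simp: Suc_le_eq\<close>)
  have i2: "(\<Sum>i<k-1. ln (real (mm i))) \<ge> (\<Sum>i<k-1. real q * ln (real i + 3) - (if i \<in> BB then c else 0))"
  proof (rule sum_mono)
    fix i assume i: "i \<in> {..<k-1}"
    show "real q * ln (real i + 3) - (if i \<in> BB then c else 0) \<le> ln (real (mm i))"
    proof (cases "i \<in> BB")
      case True
      have "real i + 3 \<le> real k + 2" using i k by auto
      then have "ln (real i + 3) \<le> ln (real k + 2)" by simp
      then show ?thesis using True unfolding mm_def c_def by (simp add: mult_left_mono)
    next
      case False
      then show ?thesis unfolding mm_def by (simp add: ln_realpow)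
    qed
  qed
  have e3: "(\<Sum>i<k-1. real q * ln (real i + 3) - (if i \<in> BB then c else 0))
      = real q * (\<Sum>i<k-1. ln (real i + 3)) - (\<Sum>i<k-1. (if i \<in> BB then c else 0))"
    by (simp add: sum_subtractf sum_distrib_left)
  have e4: "(\<Sum>i<k-1. (if i \<in> BB then c else 0)) = real (card (BB \<inter> {..<k-1})) * c"
  proof -
    have "(\<Sum>i<k-1. (if i \<in> BB then c else 0)) = (\<Sum>i\<in>{i\<in>{..<k-1}. i \<in> BB}. c)"
      by (rule sum.inter_filter[symmetric]) simp
    moreover have "{i\<in>{..<k-1}. i \<in> BB} = BB \<inter> {..<k-1}" by auto
    ultimately show ?thesis by simp
  qed
  obtain k' where kk: "k = Suc k'" using k by (cases k) auto
  have e5: "(\<Sum>i<k-1. ln (real i + 3)) = (\<Sum>t<k. ln (real t + 3)) - ln (real k + 2)"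
    using kk by (simp add: add.commute)
  have "card (BB \<inter> {..<k-1}) \<le> card (BB \<inter> {..<k})" by (intro card_mono) auto
  then have cb: "real (card (BB \<inter> {..<k-1})) \<le> th * real k" using count_BB[of k] by linarith
  have c0: "c \<ge> 0" unfolding c_def by simp
  have i6: "real (card (BB \<inter> {..<k-1})) * c \<le> th * real k * c"
    using cb c0 by (intro mult_right_mono) auto
  have "ln (\<Prod>i<k-1. real (mm i)) \<ge> real q * ((\<Sum>t<k. ln (real t + 3)) - ln (real k + 2)) - th * real k * c"
  proof -
    have "real q * (\<Sum>i<k-1. ln (real i + 3)) = real q * ((\<Sum>t<k. ln (real t + 3)) - ln (real k + 2))"
      using e5 by simp
    then show ?thesis using e1 i2 e3 e4 i6 by linarith
  qed
  then show ?thesis unfolding c_def by (simp add: algebra_simps)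
qed

lemma mass_bound: "\<exists>c0>0. \<forall>k\<ge>1. c0 \<le> (\<Prod>i<k-1. real (mm i)) * epsK mm k powr s"
proof -
  define A where "A = real q - 2 * s * (real q + 1)"
  define Bc where "Bc = real q * th"
  have AB1: "Bc < A" using key unfolding A_def Bc_def th_def by simp
  have AB: "Bc < A" "0 \<le> Bc" using AB1 th_facts unfolding Bc_def by auto
  obtain k0 where k0: "\<forall>k\<ge>k0. (Bc * real k + real q) * ln (real k + 2) \<le> A * (real k * ln (real k) - real k)"
    using asymp_ineq[OF AB, of "real q"] by auto
  have big: "G k \<ge> 1/2" if "k \<ge> k0" "k \<ge> 1" for k
  proof -
    define S where "S = (\<Sum>t<k. ln (real t + 3))"
    define L where "L = ln (real k + 2)"
    have lG: "ln (G k) = ln (\<Prod>i<k-1. real (mm i)) + s * ln (epsK mm k)"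
      unfolding G_def using mm_pos epsK_pos[of mm k]
      by (subst ln_mult_pos) (auto intro!: prod_pos simp: ln_powr Suc_le_eq)
    have a1: "ln (\<Prod>i<k-1. real (mm i)) \<ge> real q * (S - L) - real q * L * (th * real k)"
      using ln_prod_mm[OF that(2)] unfolding S_def L_def .
    have a2: "s * ln (epsK mm k) \<ge> s * (- ln 2 - 2 * (real q + 1) * S)"
      using ln_epsK[of k] s_pos unfolding S_def by (intro mult_left_mono) auto
    have x1: "s * (- ln 2 - 2 * (real q + 1) * S) = - (s * ln 2) - 2 * s * (real q + 1) * S"
      by (simp add: algebra_simps)
    have x2: "A * S = real q * S - 2 * s * (real q + 1) * S" unfolding A_def by (simp add: algebra_simps)
    have x3: "(Bc * real k + real q) * L = real q * L * (th * real k) + real q * L"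
      unfolding Bc_def by (simp add: algebra_simps)
    have x4: "real q * (S - L) = real q * S - real q * L" by (simp add: algebra_simps)
    have l1: "ln (G k) \<ge> A * S - (Bc * real k + real q) * ln (real k + 2) - s * ln 2"
      unfolding L_def[symmetric] using lG a1 a2 x1 x2 x3 x4 by linarith
    have "A * S \<ge> A * (real k * ln (real k) - real k)"
      using sum_ln3_lower[of k] AB unfolding S_def by (intro mult_left_mono) auto
    moreover have "(Bc * real k + real q) * ln (real k + 2) \<le> A * (real k * ln (real k) - real k)"
      using k0 that(1) by blast
    ultimately have "ln (G k) \<ge> - s * ln 2" using l1 by linarith
    moreover have "- s * ln 2 \<ge> - ln 2"
    proof -
      have "s * ln 2 \<le> 1 * ln 2" by (rule mult_right_mono) (use s_le1 in auto)
      then show ?thesis by simp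
    qed
    ultimately have "ln (G k) \<ge> - ln 2" by linarith
    then have "ln (G k) \<ge> ln (1/2)" by (simp add: ln_div)
    then show ?thesis using G_pos[of k] by (subst (asm) ln_le_cancel_iff) auto
  qed
  define c0 where "c0 = Min (insert (1/2) (G ` {1..<k0}))"
  have fin: "finite (insert (1/2) (G ` {1..<k0}))" by simp
  have c0pos: "c0 > 0" unfolding c0_def using G_pos fin by (subst Min_gr_iff) auto
  have "c0 \<le> G k" if "k \<ge> 1" for k
  proof (cases "k < k0")
    case True
    then show ?thesis unfolding c0_def using that fin by (intro Min_le) auto
  next
    case False
    then have "c0 \<le> 1/2" unfolding c0_def using fin by (intro Min_le) auto
    then show ?thesis using big[of k] False that by simp
  qed
  then show ?thesis using c0pos unfolding G_def by blast
qed

end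

context blocks_mass
begin

lemma digs_block:
  assumes c: "\<forall>i. c i < mm i" and k: "k < \<nu> (Nq j)"
  shows "digs c (p j + k) = digs c (p j) + k"
  using k
proof (induction k)
  case 0 then show ?case by simp
next
  case (Suc k)
  have "p j < p j + Suc k \<and> p j + Suc k < e j" using Suc.prems unfolding e_def by simp
  then have "p j + Suc k \<in> BB" unfolding BB_def by blast
  then have "c (Suc (p j + k)) = 0" using c[rule_format, of "Suc (p j + k)"] unfolding mm_def by simp
  then have "digs c (p j + Suc k) = digs c (p j + k) + 1" using digs_Suc[of c "p j + k"] by simp
  then show ?case using Suc by simp
qed

lemma K_sub_F:
  assumes c: "\<forall>i. c i < mm i"
  shows "cfval (digs c) \<in> F_set \<nu>"
proof -
  let ?x = "cfval (digs c)"
  have dg: "\<forall>t. digs c t \<ge> 2" by (rule digs_ge2)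
  have cfd: "cf_pq (Suc n) ?x = digs c n" for n by (rule cfval_digits[OF dg])
  have J: "?x \<in> J_set" unfolding J_set_def
  proof (intro CollectI conjI allI impI)
    show "0 < ?x" using cfval_bounds[OF dg] by simp
    show "?x < 1" using cfval_bounds[OF dg] by simp
    show "?x \<notin> \<rat>" by (rule cfval_irrat[OF dg])
    fix n :: nat assume "1 \<le> n"
    then obtain n' where n: "n = Suc n'" by (cases n) auto
    show "cf_pq n ?x < cf_pq (Suc n) ?x" unfolding n cfd digs_Suc by simp
  qed
  have ap: "1 \<le> Nq j \<and> is_arith_prog (\<lambda>m. cf_pq m ?x) (Nq j) (\<nu> (Nq j))" for j
  proof
    show "1 \<le> Nq j" using Nq_pos by simp
    have NS: "Nq j = Suc (p j)" unfolding p_def using Nq_pos[rule_format, of j] by simp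
    show "is_arith_prog (\<lambda>m. cf_pq m ?x) (Nq j) (\<nu> (Nq j))" unfolding is_arith_prog_def
    proof (intro exI[of _ 1] allI impI)
      fix k assume k: "k < \<nu> (Nq j)"
      have "cf_pq (Nq j + k) ?x = digs c (p j + k)" unfolding NS using cfd[of "p j + k"] by simp
      also have "\<dots> = digs c (p j) + k" by (rule digs_block[OF c k])
      also have "digs c (p j) = cf_pq (Nq j) ?x" unfolding NS cfd ..
      finally show "int (cf_pq (Nq j + k) ?x) = int (cf_pq (Nq j) ?x) + int k * 1" by simp
    qed
  qed
  have smono: "strict_mono Nq"
  proof (rule strict_monoI_Suc)
    fix n show "Nq n < Nq (Suc n)" using Nq_gap[rule_format, of n] by simp
  qed
  have "range Nq \<subseteq> {n. 1 \<le> n \<and> is_arith_prog (\<lambda>m. cf_pq m ?x) n (\<nu> n)}" using ap by auto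
  moreover have "infinite (range Nq)" using strict_mono_imp_inj_on[OF smono] by (simp add: range_inj_infinite)
  ultimately have "infinite {n. 1 \<le> n \<and> is_arith_prog (\<lambda>m. cf_pq m ?x) n (\<nu> n)}"
    using infinite_super by blast
  then show ?thesis using J unfolding F_set_def by simp
qed

lemma F_measure_pos: "hausdorff_measure s (F_set \<nu>) \<noteq> 0"
proof -
  obtain c0 where c0: "c0 > 0" "\<forall>k\<ge>1. c0 \<le> (\<Prod>i<k-1. real (mm i)) * epsK mm k powr s"
    using mass_bound by blast
  have "cantor mm (\<lambda>c. cfval (digs c)) (epsK mm) s c0"
  proof (unfold_locales)
    show "\<forall>i. 1 \<le> mm i" using mm_pos by simp
    show "compact ((\<lambda>c. cfval (digs c)) ` {c. \<forall>i. c i < mm i})" by (rule compact_K)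
    show "epsK mm k \<le> \<bar>cfval (digs c) - cfval (digs c')\<bar>"
      if "\<forall>i. c i < mm i" "\<forall>i. c' i < mm i" "\<exists>i<k. c i \<noteq> c' i" for k c c'
      by (rule sep_K[OF that])
    show "\<forall>k. 0 < epsK mm k" using epsK_pos by simp
    show "1/4 < epsK mm 0" unfolding epsK_0 by simp
    show "\<forall>r>0. \<exists>k. epsK mm k \<le> r" by (rule epsK_small)
    show "\<forall>k\<ge>1. c0 \<le> (\<Prod>i<k-1. real (mm i)) * epsK mm k powr s" by (rule c0(2))
    show "0 < s" "s \<le> 1" "0 < c0" using s_pos s_le1 c0(1) by auto
  qed
  then interpret C: cantor mm "\<lambda>c. cfval (digs c)" "epsK mm" s c0 .
  have "(\<lambda>c. cfval (digs c)) ` C.PP \<subseteq> F_set \<nu>" unfolding C.PP_def using K_sub_F by auto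
  then show ?thesis by (rule C.hausdorff_measure_pos)
qed

end

lemma hausdorff_pre_delta_mono:
  assumes "\<delta>1 \<le> \<delta>2"
  shows "hausdorff_pre t \<delta>2 E \<le> hausdorff_pre t \<delta>1 E"
  unfolding hausdorff_pre_def
  by (rule INF_superset_mono) (auto intro: order_trans[OF _ assms])

lemma hausdorff_pre_exp_mono:
  assumes "0 \<le> s'" "s' \<le> t" "\<delta> \<le> 1"
  shows "hausdorff_pre t \<delta> E \<le> hausdorff_pre s' \<delta> E"
  unfolding hausdorff_pre_def
proof (rule INF_superset_mono)
  fix U :: "nat \<Rightarrow> real set"
  assume "U \<in> {U. E \<subseteq> (\<Union>i. U i) \<and> (\<forall>i. bounded (U i) \<and> diameter (U i) \<le> \<delta>)}"
  then have d: "\<And>i. diameter (U i) \<le> 1" "\<And>i. bounded (U i)" by (auto intro: order_trans[OF _ assms(3)])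
  show "(\<Sum>i. ennreal (diameter (U i) powr t)) \<le> (\<Sum>i. ennreal (diameter (U i) powr s'))"
  proof (rule suminf_le)
    fix i
    have "diameter (U i) powr t \<le> diameter (U i) powr s'"
      using d[of i] assms diameter_ge_0[OF d(2)[of i]] by (intro powr_mono') auto
    then show "ennreal (diameter (U i) powr t) \<le> ennreal (diameter (U i) powr s')" by (rule ennreal_leI)
  qed auto
qed simp

lemma hm_zero_mono:
  assumes "0 \<le> s'" "s' \<le> t" "hausdorff_measure s' E = 0"
  shows "hausdorff_measure t E = 0"
proof -
  have "hausdorff_pre t \<delta> E \<le> 0" if "\<delta> > 0" for \<delta>
  proof -
    have "hausdorff_pre t \<delta> E \<le> hausdorff_pre t (min \<delta> 1) E"
      by (rule hausdorff_pre_delta_mono) simp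
    also have "\<dots> \<le> hausdorff_pre s' (min \<delta> 1) E"
      by (rule hausdorff_pre_exp_mono) (use assms in auto)
    also have "\<dots> \<le> hausdorff_measure s' E" unfolding hausdorff_measure_def
      by (rule SUP_upper) (use that in auto)
    finally show ?thesis using assms(3) by simp
  qed
  then have "hausdorff_measure t E \<le> 0" unfolding hausdorff_measure_def by (intro SUP_least) auto
  then show ?thesis by simp
qed

lemma dim_lower:
  assumes b: "b > 0" and pos: "\<forall>s. 0 < s \<longrightarrow> s < b \<longrightarrow> hausdorff_measure s E \<noteq> 0"
  shows "ereal b \<le> hausdorff_dim E"
  unfolding hausdorff_dim_def
proof (rule Inf_greatest)
  fix z assume "z \<in> {ereal s |s. 0 \<le> s \<and> hausdorff_measure s E = 0}"
  then obtain s where s: "z = ereal s" "0 \<le> s" "hausdorff_measure s E = 0" by auto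
  show "ereal b \<le> z"
  proof (rule ccontr)
    assume "\<not> ereal b \<le> z"
    then have sb: "s < b" using s by simp
    define t where "t = (s + b) / 2"
    have t: "0 < t" "t < b" "s \<le> t" using sb s unfolding t_def by auto
    then have "hausdorff_measure t E = 0" using hm_zero_mono[OF s(2) _ s(3)] by simp
    then show False using pos t by auto
  qed
qed

definition gsel :: "(nat \<Rightarrow> nat) \<Rightarrow> real \<Rightarrow> nat \<Rightarrow> nat" where
  "gsel \<nu> lam M = (SOME N. N > M \<and> real (\<nu> N) < lam * real N)"

fun Nseq :: "(nat \<Rightarrow> nat) \<Rightarrow> real \<Rightarrow> real \<Rightarrow> nat \<Rightarrow> nat" where
  "Nseq \<nu> lam \<kappa> 0 = gsel \<nu> lam 0"
| "Nseq \<nu> lam \<kappa> (Suc j) = gsel \<nu> lam (Nseq \<nu> lam \<kappa> j + \<nu> (Nseq \<nu> lam \<kappa> j)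
      + nat \<lceil>real (Nseq \<nu> lam \<kappa> j + \<nu> (Nseq \<nu> lam \<kappa> j)) / \<kappa>\<rceil>)"

lemma gsel_prop:
  assumes "\<forall>M. \<exists>N>M. real (\<nu> N) < lam * real N"
  shows "gsel \<nu> lam M > M \<and> real (\<nu> (gsel \<nu> lam M)) < lam * real (gsel \<nu> lam M)"
  unfolding gsel_def using someI_ex[of "\<lambda>N. N > M \<and> real (\<nu> N) < lam * real N"] assms by blast

lemma construction:
  fixes \<nu> :: "nat \<Rightarrow> nat" and a s :: real
  assumes lim: "liminf (\<lambda>n. ereal (real (\<nu> n) / real n)) = ereal a" and a: "0 \<le> a"
    and s: "0 < s" "s < 1 / (2 * (1 + a))"
  shows "hausdorff_measure s (F_set \<nu>) \<noteq> 0"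
proof -
  define \<tau> where "\<tau> = 2 * s * (1 + a)"
  have \<tau>0: "0 < \<tau>" unfolding \<tau>_def using s a by (intro mult_pos_pos) auto
  have "\<tau> < 1" using s a unfolding \<tau>_def by (simp add: field_simps)
  note \<tau> = \<tau>0 this
  define lam where "lam = a + (1 - \<tau>) / (4 * s)"
  define \<kappa> where "\<kappa> = (1 - \<tau>) / 8"
  have "(1 - \<tau>) / (4 * s) > 0" using \<tau> s by simp
  then have lam: "lam > a" "lam > 0" using a unfolding lam_def by auto
  have kap: "0 < \<kappa>" "\<kappa> < 1" using \<tau> unfolding \<kappa>_def by auto
  have l2: "2 * s * (1 + lam) = (1 + \<tau>) / 2" unfolding lam_def \<tau>_def using s by (simp add: field_simps)
  obtain q :: nat where q: "real q > 2 * (1 + \<tau>) / (1 - \<tau>)" using reals_Archimedean2 by blast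
  have q1: "q \<ge> 1" using q \<tau> by (cases q) (auto simp: divide_simps)
  have key: "real q * ((lam + \<kappa>) / (1 + lam)) < real q - 2 * s * (real q + 1)"
  proof -
    have qq: "real q * (1 - \<tau>) > 2 * (1 + \<tau>)" using q \<tau> by (simp add: field_simps)
    have "2 * s * (real q + 1) * (1 + lam) = (2 * s * (1 + lam)) * (real q + 1)"
      by (simp add: algebra_simps)
    also have "\<dots> = (1 + \<tau>) / 2 * (real q + 1)" by (simp only: l2)
    also have "\<dots> < real q * (1 - \<kappa>)" using qq \<tau> unfolding \<kappa>_def by (simp add: field_simps)
    finally have "2 * s * (real q + 1) * (1 + lam) < real q * (1 - \<kappa>)" .
    then have "real q * (lam + \<kappa>) < (real q - 2 * s * (real q + 1)) * (1 + lam)"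
      by (simp add: algebra_simps)
    then show ?thesis using lam by (simp add: field_simps)
  qed
  have freq: "\<forall>M. \<exists>N>M. real (\<nu> N) < lam * real N"
  proof
    fix M
    have "liminf (\<lambda>n. ereal (real (\<nu> n) / real n)) < ereal lam" using lim lam by simp
    then obtain N where N: "N > M" "ereal (real (\<nu> N) / real N) < ereal lam"
      using liminf_upper_bound by blast
    then have "real (\<nu> N) / real N < lam" by simp
    moreover have "real N > 0" using N by simp
    ultimately have "real (\<nu> N) < lam * real N" by (simp add: divide_less_eq)
    then show "\<exists>N>M. real (\<nu> N) < lam * real N" using N by blast
  qed
  define Nq where "Nq = Nseq \<nu> lam \<kappa>"
  have gp: "\<And>M. gsel \<nu> lam M > M \<and> real (\<nu> (gsel \<nu> lam M)) < lam * real (gsel \<nu> lam M)"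
    using gsel_prop[OF freq] by blast
  have NqS: "Nq (Suc j) = gsel \<nu> lam (Nq j + \<nu> (Nq j) + nat \<lceil>real (Nq j + \<nu> (Nq j)) / \<kappa>\<rceil>)" for j
    unfolding Nq_def by simp
  have Nq0: "Nq 0 = gsel \<nu> lam 0" unfolding Nq_def by simp
  have "blocks_mass \<nu> Nq lam \<kappa> q s"
  proof (unfold_locales)
    show "\<forall>j. 1 \<le> Nq j"
    proof
      fix j
      obtain M where "Nq j = gsel \<nu> lam M"
      proof (cases j)
        case 0 then show ?thesis using Nq0 that by blast
      next
        case (Suc j') then show ?thesis using NqS that by blast
      qed
      then show "1 \<le> Nq j" using gp[of M] by simp
    qed
    show "\<forall>j. real (\<nu> (Nq j)) < lam * real (Nq j)"
      using gp by (metis Nq0 NqS not0_implies_Suc)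
    show "\<forall>j. Nq j + \<nu> (Nq j) + 1 \<le> Nq (Suc j)"
    proof
      fix j show "Nq j + \<nu> (Nq j) + 1 \<le> Nq (Suc j)" unfolding NqS using gp
        by (metis (no_types, lifting) Suc_eq_plus1 Suc_le_eq le_add1 le_less_trans)
    qed
    show "\<forall>j. real (Nq j - 1 + \<nu> (Nq j)) \<le> \<kappa> * real (Nq (Suc j) - 1)"
    proof
      fix j
      define P where "P = Nq j + \<nu> (Nq j)"
      have g: "Nq (Suc j) > P + nat \<lceil>real P / \<kappa>\<rceil>" unfolding NqS P_def using gp by blast
      then have "real (Nq (Suc j) - 1) \<ge> real (nat \<lceil>real P / \<kappa>\<rceil>)" by simp
      moreover have "real (nat \<lceil>real P / \<kappa>\<rceil>) \<ge> real P / \<kappa>" by (rule real_nat_ceiling_ge)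
      ultimately have "real (Nq (Suc j) - 1) \<ge> real P / \<kappa>" by linarith
      then have "\<kappa> * real (Nq (Suc j) - 1) \<ge> real P" using kap by (simp add: field_simps)
      moreover have "real (Nq j - 1 + \<nu> (Nq j)) \<le> real P" unfolding P_def by simp
      ultimately show "real (Nq j - 1 + \<nu> (Nq j)) \<le> \<kappa> * real (Nq (Suc j) - 1)" by linarith
    qed
    show "0 < lam" "0 < \<kappa>" "\<kappa> < 1" using lam kap by auto
    show "1 \<le> q" by (rule q1)
    have "2 * s * a \<ge> 0" using s a by simp
    then have "2 * s \<le> \<tau>" unfolding \<tau>_def by (simp add: algebra_simps)
    then show "0 < s" "s \<le> 1" using s \<tau> by auto
    show "real q * ((lam + \<kappa>) / (1 + lam)) < real q - 2 * s * (real q + 1)" by (rule key)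
  qed
  then interpret BM: blocks_mass \<nu> Nq lam \<kappa> q s .
  show ?thesis by (rule BM.F_measure_pos)
qed

theorem proposition4p1:
  fixes \<nu> :: "nat \<Rightarrow> nat" and \<alpha> :: ereal
  assumes pos: "\<forall>n\<ge>1. 1 \<le> \<nu> n"
    and incr: "\<forall>n\<ge>1. \<nu> n \<le> \<nu> (Suc n)"
    and alpha: "\<alpha> = liminf (\<lambda>n. ereal (real (\<nu> n) / real n))"
  shows "hausdorff_dim (F_set \<nu>) \<ge>
           (if \<alpha> = \<infinity> then 0 else ereal (1 / (2 * (1 + real_of_ereal \<alpha>))))"
proof (cases "\<alpha> = \<infinity>")
  case True
  have "0 \<le> hausdorff_dim (F_set \<nu>)" unfolding hausdorff_dim_def
    by (rule Inf_greatest) auto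
  then show ?thesis using True by simp
next
  case False
  have a0: "0 \<le> \<alpha>" unfolding alpha
    by (rule Liminf_bounded) (auto intro!: always_eventually)
  then obtain a where a: "\<alpha> = ereal a" "0 \<le> a" using False by (cases \<alpha>) auto
  have "ereal (1 / (2 * (1 + a))) \<le> hausdorff_dim (F_set \<nu>)"
  proof (rule dim_lower)
    show "0 < 1 / (2 * (1 + a))" using a by simp
    show "\<forall>s. 0 < s \<longrightarrow> s < 1 / (2 * (1 + a)) \<longrightarrow> hausdorff_measure s (F_set \<nu>) \<noteq> 0"
      using construction[of \<nu> a] alpha a by auto
  qed
  then show ?thesis using False a by simp
qed

end
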